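(* Let $G$ be a connected $m$-uniform hypergraph on $n$ vertices, and let $d(G)$ be the maximum length of a path in $G$. Then $s(G)\le m^{n-d(G)-1}$ and $\gamma(G)\le(n-d(G)-1)\mathrm{cl}(m)$.
   Context: Paths: a walk $v_1,e_1,\dots,v_l,e_l,v_{l+1}$ (with $\{v_i,v_{i+1}\}\subseteq e_i$) is a path of length $l$ if its vertices and edges are distinct and $v_i\notin\bigcup_{j>i}e_j$ for $i=1,\dots,l-1$. Adjacency tensor $\mathcal{A}(G)$ (vertices $v_1,\dots,v_n$): $a_{i_1\cdots i_m}=\frac1{(m-1)!}$ if $\{v_{i_1},\dots,v_{i_m}\}$ is an edge, else $0$. For a tensor $\mathcal{A}$: eigenvectors $\mathcal{A}x^{m-1}=\lambda x^{[m-1]}$, $x\ne0$, $(\mathcal{A}x^{m-1})_i=\sum a_{ii_2\cdots i_m}x_{i_2}\cdots x_{i_m}$; $\rho(\mathcal{A})$ spectral radius. Stabilizing index $s(\mathcal{A})$: number of invertible diagonal $D$ with $d_{11}=1$ and $\mathcal{A}=D^{-(m-1)}\mathcal{A}D$, $(D^{-(m-1)}\mathcal{A}D)_{i_1\cdots i_m}=d_{i_1}^{-(m-1)}a_{i_1\cdots i_m}d_{i_2}\cdots d_{i_m}$. Stabilizing dimension $\gamma(\mathcal{A})$: composition length of the $\mathbb{Z}_m$-module of eigenvectors $y$ for $\rho(\mathcal{A})$ normalized by $y_1=1$, with operation $y\circ\hat y=D_yD_{\hat y}v_p$, $D_y=\mathrm{diag}(y_i/|y_i|)$, $v_p$ the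 positive one. $s(G)=s(\mathcal{A}(G))$, $\gamma(G)=\gamma(\mathcal{A}(G))$. $\mathrm{cl}(m)$: number of prime factors of $m$ with multiplicity. *)

theory Defs
  imports Complex_Main "HOL-Computational_Algebra.Primes"
begin

text \<open>Hypergraphs on the vertex set {0..<n} (vertex v_{i+1} of the paper is i here);
  edges are sets of vertices.\<close>

definition uniform_hypergraph :: "nat \<Rightarrow> nat \<Rightarrow> nat set set \<Rightarrow> bool" where
  "uniform_hypergraph n m E \<longleftrightarrow> (\<forall>e\<in>E. e \<subseteq> {..<n} \<and> card e = m)"

definition hg_adj :: "nat set set \<Rightarrow> (nat \<times> nat) set" where
  "hg_adj E = {(u, v). \<exists>e\<in>E. u \<in> e \<and> v \<in> e}"

definition hg_connected :: "nat \<Rightarrow> nat set set \<Rightarrow> bool" where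
  "hg_connected n E \<longleftrightarrow> (\<forall>u<n. \<forall>v<n. (u, v) \<in> (hg_adj E)\<^sup>*)"

text \<open>Path v_1,e_1,...,v_l,e_l,v_{l+1} given as vertex list vs (length l+1) and edge list es
  (length l), 0-indexed.\<close>
definition is_path :: "nat \<Rightarrow> nat set set \<Rightarrow> nat list \<Rightarrow> nat set list \<Rightarrow> bool" where
  "is_path n E vs es \<longleftrightarrow>
     length vs = Suc (length es) \<and> set vs \<subseteq> {..<n} \<and> set es \<subseteq> E \<and>
     distinct vs \<and> distinct es \<and>
     (\<forall>i<length es. {vs ! i, vs ! Suc i} \<subseteq> es ! i) \<and>
     (\<forall>i j. i < j \<and> j < length es \<longrightarrow> vs ! i \<notin> es ! j)"

definition max_path_length :: "nat \<Rightarrow> nat set set \<Rightarrow> nat" where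
  "max_path_length n E = Max {length es | vs es. is_path n E vs es}"

text \<open>Tensors of order m and dimension n: functions on index lists (entries in {0..<n}).\<close>

definition adj_tensor :: "nat \<Rightarrow> nat set set \<Rightarrow> nat list \<Rightarrow> real" where
  "adj_tensor m E is = (if length is = m \<and> set is \<in> E then 1 / fact (m - 1) else 0)"

definition idx_lists :: "nat \<Rightarrow> nat \<Rightarrow> nat list set" where
  "idx_lists n k = {is. length is = k \<and> set is \<subseteq> {..<n}}"

definition tensor_apply :: "nat \<Rightarrow> nat \<Rightarrow> (nat list \<Rightarrow> real) \<Rightarrow> (nat \<Rightarrow> complex) \<Rightarrow> nat \<Rightarrow> complex" where
  "tensor_apply n m A x i = (\<Sum>is\<in>idx_lists n (m - 1). complex_of_real (A (i # is)) * prod_list (map x is))"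

text \<open>Vectors in C^n: functions vanishing outside {0..<n}.\<close>
definition is_vec :: "nat \<Rightarrow> (nat \<Rightarrow> complex) \<Rightarrow> bool" where
  "is_vec n x \<longleftrightarrow> (\<forall>i\<ge>n. x i = 0)"

definition tensor_eigenpair :: "nat \<Rightarrow> nat \<Rightarrow> (nat list \<Rightarrow> real) \<Rightarrow> complex \<Rightarrow> (nat \<Rightarrow> complex) \<Rightarrow> bool" where
  "tensor_eigenpair n m A lam x \<longleftrightarrow> is_vec n x \<and> (\<exists>i<n. x i \<noteq> 0) \<and>
     (\<forall>i<n. tensor_apply n m A x i = lam * x i ^ (m - 1))"

definition tensor_spectral_radius :: "nat \<Rightarrow> nat \<Rightarrow> (nat list \<Rightarrow> real) \<Rightarrow> real" where
  "tensor_spectral_radius n m A = Sup {cmod lam | lam. \<exists>x. tensor_eigenpair n m A lam x}"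

text \<open>Stabilizing index: number of invertible diagonal D (diagonal d, with d i = 1 for i \<ge> n as
  canonical padding) with d_11 = 1 and A = D^{-(m-1)} A D.\<close>
definition stabilizing_index :: "nat \<Rightarrow> nat \<Rightarrow> (nat list \<Rightarrow> real) \<Rightarrow> nat" where
  "stabilizing_index n m A = card {d :: nat \<Rightarrow> complex.
      (\<forall>i<n. d i \<noteq> 0) \<and> (\<forall>i\<ge>n. d i = 1) \<and> d 0 = 1 \<and>
      (\<forall>is\<in>idx_lists n m. complex_of_real (A is) =
          inverse (d (hd is) ^ (m - 1)) * complex_of_real (A is) * prod_list (map d (tl is)))}"

definition rho_vecs :: "nat \<Rightarrow> nat \<Rightarrow> (nat list \<Rightarrow> real) \<Rightarrow> (nat \<Rightarrow> complex) set" where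
  "rho_vecs n m A = {y. tensor_eigenpair n m A (complex_of_real (tensor_spectral_radius n m A)) y \<and> y 0 = 1}"

definition pos_vec :: "nat \<Rightarrow> nat \<Rightarrow> (nat list \<Rightarrow> real) \<Rightarrow> nat \<Rightarrow> complex" where
  "pos_vec n m A = (THE y. y \<in> rho_vecs n m A \<and> (\<forall>i<n. y i \<in> \<real> \<and> 0 < Re (y i)))"

text \<open>y o y' = D_y D_{y'} v_p with D_y = diag(y_i/|y_i|).\<close>
definition stab_op :: "nat \<Rightarrow> nat \<Rightarrow> (nat list \<Rightarrow> real) \<Rightarrow> (nat \<Rightarrow> complex) \<Rightarrow> (nat \<Rightarrow> complex) \<Rightarrow> nat \<Rightarrow> complex" where
  "stab_op n m A y z = (\<lambda>i. if i < n then sgn (y i) * sgn (z i) * pos_vec n m A i else 0)"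

text \<open>Z_m-scalar action: k . y = y o ... o y (k times), 0 . y = v_p (the zero of the module).\<close>
definition stab_smult :: "nat \<Rightarrow> nat \<Rightarrow> (nat list \<Rightarrow> real) \<Rightarrow> nat \<Rightarrow> (nat \<Rightarrow> complex) \<Rightarrow> nat \<Rightarrow> complex" where
  "stab_smult n m A k y = (stab_op n m A y ^^ k) (pos_vec n m A)"

definition stab_submodule :: "nat \<Rightarrow> nat \<Rightarrow> (nat list \<Rightarrow> real) \<Rightarrow> (nat \<Rightarrow> complex) set \<Rightarrow> bool" where
  "stab_submodule n m A N \<longleftrightarrow> N \<subseteq> rho_vecs n m A \<and> pos_vec n m A \<in> N \<and>
     (\<forall>a\<in>N. \<forall>b\<in>N. stab_op n m A a b \<in> N) \<and>
     (\<forall>a\<in>N. \<forall>k. stab_smult n m A k a \<in> N)"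

text \<open>Composition length = maximal length of a strictly increasing chain of submodules.\<close>
definition stabilizing_dimension :: "nat \<Rightarrow> nat \<Rightarrow> (nat list \<Rightarrow> real) \<Rightarrow> nat" where
  "stabilizing_dimension n m A = Max {k. \<exists>N :: nat \<Rightarrow> (nat \<Rightarrow> complex) set.
      (\<forall>i\<le>k. stab_submodule n m A (N i)) \<and> (\<forall>i<k. N i \<subset> N (Suc i))}"

definition cl :: "nat \<Rightarrow> nat" where
  "cl m = size (prime_factorization m)"

end

theory Submission
  imports Defs "HOL-Analysis.Analysis" "HOL-Algebra.Coset" "HOL-Combinatorics.Multiset_Permutations"
begin

locale hg =
  fixes n m :: nat and E :: "nat set set"
  assumes m2: "m \<ge> 2" and n1: "n \<ge> 1" and unif: "uniform_hypergraph n m E"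
    and conn: "hg_connected n E"
begin

lemma edge_sub: "e \<in> E \<Longrightarrow> e \<subseteq> {..<n}" using unif unfolding uniform_hypergraph_def by auto
lemma edge_card: "e \<in> E \<Longrightarrow> card e = m" using unif unfolding uniform_hypergraph_def by auto
lemma edge_fin: "e \<in> E \<Longrightarrow> finite e" using edge_sub finite_subset by blast
lemma finE: "finite E"
proof -
  have "E \<subseteq> Pow {..<n}" using edge_sub by auto
  thus ?thesis by (meson finite_Pow_iff finite_lessThan finite_subset)
qed

lemma finite_idx: "finite (idx_lists n k)"
proof -
  have "idx_lists n k = {xs. set xs \<subseteq> {..<n} \<and> length xs = k}" unfolding idx_lists_def by auto
  thus ?thesis using finite_lists_length_eq[of "{..<n}" k] by simp
qed

lemma tensor_formula:
  "tensor_apply n m (adj_tensor m E) x i = (\<Sum>e\<in>{e\<in>E. i \<in> e}. \<Prod>j\<in>e-{i}. x j)"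
proof -
  define c :: complex where "c = complex_of_real (1 / fact (m - 1))"
  define P where "P = (\<lambda>e. permutations_of_set (e - {i}))"
  have "tensor_apply n m (adj_tensor m E) x i =
      (\<Sum>is\<in>idx_lists n (m - 1). if set (i # is) \<in> E then c * prod_list (map x is) else 0)"
    unfolding tensor_apply_def adj_tensor_def c_def
    by (rule sum.cong) (use m2 in \<open>auto simp: idx_lists_def\<close>)
  also have "\<dots> = (\<Sum>is\<in>{is\<in>idx_lists n (m - 1). set (i # is) \<in> E}. c * prod_list (map x is))"
    by (rule sum.inter_filter[OF finite_idx, symmetric])
  also have "{is\<in>idx_lists n (m - 1). set (i # is) \<in> E} = (\<Union>e\<in>{e\<in>E. i \<in> e}. P e)"
  proof (intro Set.set_eqI iffI)
    fix xs assume "xs \<in> {is\<in>idx_lists n (m - 1). set (i # is) \<in> E}"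
    hence L: "length xs = m - 1" and S: "set (i # xs) \<in> E" by (auto simp: idx_lists_def)
    have "card (set (i # xs)) = m" using edge_card[OF S] .
    hence "card (set (i # xs)) = length (i # xs)" using L m2 by simp
    hence D: "distinct (i # xs)" by (rule card_distinct)
    show "xs \<in> (\<Union>e\<in>{e\<in>E. i \<in> e}. P e)"
      using S D by (auto simp: P_def permutations_of_set_def intro!: bexI[of _ "set (i # xs)"])
  next
    fix xs assume "xs \<in> (\<Union>e\<in>{e\<in>E. i \<in> e}. P e)"
    then obtain e where e: "e \<in> E" "i \<in> e" and xs: "set xs = e - {i}" "distinct xs"
      by (auto simp: P_def permutations_of_set_def)
    have "length xs = card (e - {i})" using xs distinct_card by metis
    also have "\<dots> = m - 1" using e edge_card edge_fin by simp
    finally have "length xs = m - 1" .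
    moreover have "set (i # xs) = e" using xs e by auto
    ultimately show "xs \<in> {is\<in>idx_lists n (m - 1). set (i # is) \<in> E}"
      using e edge_sub xs by (auto simp: idx_lists_def)
  qed
  also have "(\<Sum>is\<in>(\<Union>e\<in>{e\<in>E. i \<in> e}. P e). c * prod_list (map x is))
      = (\<Sum>e\<in>{e\<in>E. i \<in> e}. \<Sum>is\<in>P e. c * prod_list (map x is))"
  proof (rule sum.UNION_disjoint)
    show "finite {e\<in>E. i \<in> e}" using finE by simp
    show "\<forall>e\<in>{e\<in>E. i \<in> e}. finite (P e)"
    proof
      fix e assume "e \<in> {e\<in>E. i \<in> e}"
      hence "finite (e - {i})" using edge_fin by auto
      hence "card (P e) > 0" by (simp add: P_def)
      thus "finite (P e)" using card_ge_0_finite by blast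
    qed
    show "\<forall>e\<in>{e\<in>E. i \<in> e}. \<forall>e'\<in>{e\<in>E. i \<in> e}. e \<noteq> e' \<longrightarrow> P e \<inter> P e' = {}"
    proof (intro ballI impI)
      fix e e' assume e: "e \<in> {e\<in>E. i \<in> e}" and e': "e' \<in> {e\<in>E. i \<in> e}" and ne: "e \<noteq> e'"
      show "P e \<inter> P e' = {}"
      proof (rule ccontr)
        assume "P e \<inter> P e' \<noteq> {}"
        then obtain xs where "set xs = e - {i}" "set xs = e' - {i}" by (auto simp: P_def permutations_of_set_def)
        hence "insert i (e - {i}) = insert i (e' - {i})" by simp
        thus False using e e' ne by (simp add: insert_absorb)
      qed
    qed
  qed
  also have "\<dots> = (\<Sum>e\<in>{e\<in>E. i \<in> e}. \<Prod>j\<in>e-{i}. x j)"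
  proof (rule sum.cong[OF refl])
    fix e assume e: "e \<in> {e\<in>E. i \<in> e}"
    have "(\<Sum>is\<in>P e. c * prod_list (map x is)) = (\<Sum>is\<in>P e. c * (\<Prod>j\<in>e-{i}. x j))"
    proof (rule sum.cong[OF refl])
      fix xs assume "xs \<in> P e"
      hence xs: "set xs = e - {i}" "distinct xs" by (simp_all add: P_def permutations_of_set_def)
      have "prod_list (map x xs) = prod x (set xs)" using prod.distinct_set_conv_list[OF xs(2), of x] by simp
      thus "c * prod_list (map x xs) = c * (\<Prod>j\<in>e-{i}. x j)" using xs(1) by simp
    qed
    also have "\<dots> = of_nat (card (P e)) * (c * (\<Prod>j\<in>e-{i}. x j))" by (rule sum_constant)
    also have "card (P e) = fact (m - 1)"
    proof -
      have "finite (e - {i})" "card (e - {i}) = m - 1" using e edge_card edge_fin by auto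
      thus ?thesis unfolding P_def by simp
    qed
    also have "of_nat (fact (m - 1)) * (c * (\<Prod>j\<in>e-{i}. x j)) = (\<Prod>j\<in>e-{i}. x j)"
      unfolding c_def by simp
    finally show "(\<Sum>is\<in>P e. c * prod_list (map x is)) = (\<Prod>j\<in>e-{i}. x j)" .
  qed
  finally show ?thesis .
qed

end

definition pgrp :: "(nat \<Rightarrow> complex) set \<Rightarrow> (nat \<Rightarrow> complex) monoid" where
  "pgrp T = \<lparr>carrier = T, mult = (\<lambda>a b. (\<lambda>i. a i * b i)), one = (\<lambda>i. 1)\<rparr>"

definition good_set :: "nat \<Rightarrow> (nat \<Rightarrow> complex) set \<Rightarrow> bool" where
  "good_set k T \<longleftrightarrow> (\<lambda>i. 1) \<in> T \<and> (\<forall>a\<in>T. \<forall>b\<in>T. (\<lambda>i. a i * b i) \<in> T) \<and> (\<forall>a\<in>T. \<forall>i. a i ^ k = 1)"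

lemma pow_in_good:
  assumes "good_set k T" "a \<in> T" shows "(\<lambda>i. a i ^ j) \<in> T"
proof (induction j)
  case 0 then show ?case using assms by (simp add: good_set_def)
next
  case (Suc j)
  have "(\<lambda>i. a i * (a i ^ j)) \<in> T" using assms Suc by (simp add: good_set_def)
  thus ?case by simp
qed

lemma pgrp_group:
  assumes "good_set k T" "k \<ge> 1"
  shows "group (pgrp T)"
proof (rule groupI)
  show "\<And>x y. x \<in> carrier (pgrp T) \<Longrightarrow> y \<in> carrier (pgrp T) \<Longrightarrow> x \<otimes>\<^bsub>pgrp T\<^esub> y \<in> carrier (pgrp T)"
    using assms by (simp add: pgrp_def good_set_def)
  show "\<one>\<^bsub>pgrp T\<^esub> \<in> carrier (pgrp T)" using assms by (simp add: pgrp_def good_set_def)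
  show "\<And>x y z. x \<in> carrier (pgrp T) \<Longrightarrow> y \<in> carrier (pgrp T) \<Longrightarrow> z \<in> carrier (pgrp T) \<Longrightarrow>
          x \<otimes>\<^bsub>pgrp T\<^esub> y \<otimes>\<^bsub>pgrp T\<^esub> z = x \<otimes>\<^bsub>pgrp T\<^esub> (y \<otimes>\<^bsub>pgrp T\<^esub> z)"
    by (simp add: pgrp_def mult.assoc)
  show "\<And>x. x \<in> carrier (pgrp T) \<Longrightarrow> \<one>\<^bsub>pgrp T\<^esub> \<otimes>\<^bsub>pgrp T\<^esub> x = x"
    by (simp add: pgrp_def)
  show "\<And>x. x \<in> carrier (pgrp T) \<Longrightarrow> \<exists>y\<in>carrier (pgrp T). y \<otimes>\<^bsub>pgrp T\<^esub> x = \<one>\<^bsub>pgrp T\<^esub>"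
  proof -
    fix x assume x: "x \<in> carrier (pgrp T)"
    have "(\<lambda>i. x i ^ (k - 1)) \<in> T" using pow_in_good[OF assms(1)] x by (simp add: pgrp_def)
    moreover have "(\<lambda>i. x i ^ (k - 1) * x i) = (\<lambda>i. 1)"
    proof
      fix i have "x i ^ (k - 1) * x i = x i ^ k" using assms(2) by (cases k) (simp_all add: power_Suc2)
      thus "x i ^ (k - 1) * x i = 1" using assms x by (simp add: good_set_def pgrp_def)
    qed
    ultimately show "\<exists>y\<in>carrier (pgrp T). y \<otimes>\<^bsub>pgrp T\<^esub> x = \<one>\<^bsub>pgrp T\<^esub>"
      by (auto simp: pgrp_def intro!: bexI[of _ "\<lambda>i. x i ^ (k - 1)"])
  qed
qed

lemma good_card_dvd:
  assumes "good_set k T1" "good_set k T2" "T1 \<subseteq> T2" "k \<ge> 1"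
  shows "card T1 dvd card T2"
proof -
  interpret G: group "pgrp T2" by (rule pgrp_group[OF assms(2,4)])
  have sub: "subgroup T1 (pgrp T2)"
  proof (rule G.subgroupI)
    show "T1 \<subseteq> carrier (pgrp T2)" using assms by (simp add: pgrp_def)
    show "T1 \<noteq> {}" using assms(1) by (auto simp: good_set_def)
    show "\<And>a b. a \<in> T1 \<Longrightarrow> b \<in> T1 \<Longrightarrow> a \<otimes>\<^bsub>pgrp T2\<^esub> b \<in> T1"
      using assms(1) by (simp add: pgrp_def good_set_def)
    show "\<And>a. a \<in> T1 \<Longrightarrow> inv\<^bsub>pgrp T2\<^esub> a \<in> T1"
    proof -
      fix a assume a: "a \<in> T1"
      have a2: "a \<in> carrier (pgrp T2)" using a assms(3) by (auto simp: pgrp_def)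
      have p: "(\<lambda>i. a i ^ (k - 1)) \<in> T1" by (rule pow_in_good[OF assms(1) a])
      hence p2: "(\<lambda>i. a i ^ (k - 1)) \<in> carrier (pgrp T2)" using assms(3) by (auto simp: pgrp_def)
      have "(\<lambda>i. a i ^ (k - 1)) \<otimes>\<^bsub>pgrp T2\<^esub> a = \<one>\<^bsub>pgrp T2\<^esub>"
      proof -
        have "(\<lambda>i. a i ^ (k - 1) * a i) = (\<lambda>i. 1)"
        proof
          fix i have "a i ^ (k - 1) * a i = a i ^ k" using assms(4) by (cases k) (simp_all add: power_Suc2)
          thus "a i ^ (k - 1) * a i = 1" using assms(1) a by (simp add: good_set_def)
        qed
        thus ?thesis by (simp add: pgrp_def)
      qed
      hence "inv\<^bsub>pgrp T2\<^esub> a = (\<lambda>i. a i ^ (k - 1))" using G.inv_equality[OF _ a2 p2] by simp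
      thus "inv\<^bsub>pgrp T2\<^esub> a \<in> T1" using p by simp
    qed
  qed
  have "card (rcosets\<^bsub>pgrp T2\<^esub> T1) * card T1 = order (pgrp T2)" by (rule G.lagrange[OF sub])
  thus ?thesis unfolding order_def pgrp_def by (metis dvd_triv_right partial_object.select_convs(1))
qed


context hg
begin

lemma conn_prop:
  assumes step: "\<And>e u v. e \<in> E \<Longrightarrow> u \<in> e \<Longrightarrow> v \<in> e \<Longrightarrow> Q u \<Longrightarrow> Q v"
    and q0: "Q 0" and j: "j < n"
  shows "Q j"
proof -
  have "(0, j) \<in> (hg_adj E)\<^sup>*" using conn n1 j unfolding hg_connected_def by auto
  thus ?thesis
  proof (induction rule: rtrancl_induct)
    case base then show ?case using q0 .
  next
    case (step y z)
    then obtain e where "e \<in> E" "y \<in> e" "z \<in> e" by (auto simp: hg_adj_def)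
    thus ?case using assms(1) step.IH by blast
  qed
qed

definition edgecond :: "(nat \<Rightarrow> complex) \<Rightarrow> bool" where
  "edgecond d \<longleftrightarrow> (\<forall>e\<in>E. \<forall>i\<in>e. (\<Prod>j\<in>e-{i}. d j) = d i ^ (m - 1))"

definition Sset :: "(nat \<Rightarrow> complex) set" where
  "Sset = {d. (\<forall>i<n. d i \<noteq> 0) \<and> (\<forall>i\<ge>n. d i = 1) \<and> d 0 = 1 \<and> edgecond d}"

lemma adj_nonzero_iff:
  "xs \<in> idx_lists n m \<Longrightarrow> adj_tensor m E xs \<noteq> 0 \<longleftrightarrow> set xs \<in> E"
  by (auto simp: adj_tensor_def idx_lists_def)

lemma edge_list:
  assumes "xs \<in> idx_lists n m" "set xs \<in> E"
  shows "distinct xs" "xs \<noteq> []" "set (tl xs) = set xs - {hd xs}" "distinct (tl xs)" "hd xs \<in> set xs"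
proof -
  have "card (set xs) = length xs" using edge_card[OF assms(2)] assms(1) by (simp add: idx_lists_def)
  thus D: "distinct xs" by (rule card_distinct)
  show NE: "xs \<noteq> []" using assms(1) m2 by (auto simp: idx_lists_def)
  then obtain a ys where xs: "xs = a # ys" by (cases xs) auto
  show "set (tl xs) = set xs - {hd xs}" "distinct (tl xs)" "hd xs \<in> set xs" using D xs by auto
qed

lemma Sset_alt:
  "stabilizing_index n m (adj_tensor m E) = card Sset"
proof -
  have "{d :: nat \<Rightarrow> complex.
      (\<forall>i<n. d i \<noteq> 0) \<and> (\<forall>i\<ge>n. d i = 1) \<and> d 0 = 1 \<and>
      (\<forall>is\<in>idx_lists n m. complex_of_real (adj_tensor m E is) =
          inverse (d (hd is) ^ (m - 1)) * complex_of_real (adj_tensor m E is) * prod_list (map d (tl is)))} = Sset"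
  proof (intro Set.set_eqI iffI)
    fix d assume "d \<in> {d :: nat \<Rightarrow> complex.
      (\<forall>i<n. d i \<noteq> 0) \<and> (\<forall>i\<ge>n. d i = 1) \<and> d 0 = 1 \<and>
      (\<forall>is\<in>idx_lists n m. complex_of_real (adj_tensor m E is) =
          inverse (d (hd is) ^ (m - 1)) * complex_of_real (adj_tensor m E is) * prod_list (map d (tl is)))}"
    hence nz: "\<forall>i<n. d i \<noteq> 0" and rest: "(\<forall>i\<ge>n. d i = 1)" "d 0 = 1"
      and C: "\<forall>is\<in>idx_lists n m. complex_of_real (adj_tensor m E is) =
          inverse (d (hd is) ^ (m - 1)) * complex_of_real (adj_tensor m E is) * prod_list (map d (tl is))"
      by auto
    have "edgecond d" unfolding edgecond_def
    proof (intro ballI)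
      fix e i assume e: "e \<in> E" and i: "i \<in> e"
      obtain ys where ys: "set ys = e - {i}" "distinct ys" using finite_distinct_list[of "e - {i}"] edge_fin[OF e] by auto
      have "length ys = m - 1" using ys e i edge_card edge_fin by (metis card_Diff_singleton distinct_card)
      hence L: "length (i # ys) = m" using m2 by simp
      have St: "set (i # ys) = e" using ys i by auto
      have I: "i # ys \<in> idx_lists n m" using L St edge_sub[OF e] by (simp add: idx_lists_def)
      have "adj_tensor m E (i # ys) \<noteq> 0" using adj_nonzero_iff[OF I] St e by simp
      hence a0: "complex_of_real (adj_tensor m E (i # ys)) \<noteq> 0" by simp
      have eq: "complex_of_real (adj_tensor m E (i # ys)) = inverse (d i ^ (m - 1)) * complex_of_real (adj_tensor m E (i # ys)) * prod_list (map d ys)"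
        using C I by auto
      hence "complex_of_real (adj_tensor m E (i # ys)) * (inverse (d i ^ (m - 1)) * prod_list (map d ys) - 1) = 0"
        by (simp add: algebra_simps)
      hence "inverse (d i ^ (m - 1)) * prod_list (map d ys) = 1" using a0 by simp
      moreover have "d i \<noteq> 0" using nz edge_sub[OF e] i by auto
      ultimately have "prod_list (map d ys) = d i ^ (m - 1)" by (simp add: field_simps)
      thus "(\<Prod>j\<in>e-{i}. d j) = d i ^ (m - 1)" using ys prod.distinct_set_conv_list by metis
    qed
    thus "d \<in> Sset" using nz rest by (simp add: Sset_def)
  next
    fix d assume "d \<in> Sset"
    hence nz: "\<forall>i<n. d i \<noteq> 0" and rest: "(\<forall>i\<ge>n. d i = 1)" "d 0 = 1" and ec: "edgecond d"
      by (auto simp: Sset_def)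
    have "\<forall>is\<in>idx_lists n m. complex_of_real (adj_tensor m E is) =
          inverse (d (hd is) ^ (m - 1)) * complex_of_real (adj_tensor m E is) * prod_list (map d (tl is))"
    proof
      fix xs assume I: "xs \<in> idx_lists n m"
      show "complex_of_real (adj_tensor m E xs) =
          inverse (d (hd xs) ^ (m - 1)) * complex_of_real (adj_tensor m E xs) * prod_list (map d (tl xs))"
      proof (cases "set xs \<in> E")
        case False
        hence "adj_tensor m E xs = 0" using adj_nonzero_iff[OF I] by simp
        thus ?thesis by simp
      next
        case True
        note el = edge_list[OF I True]
        have "prod_list (map d (tl xs)) = (\<Prod>j\<in>set xs - {hd xs}. d j)"
          using el prod.distinct_set_conv_list by metis
        also have "\<dots> = d (hd xs) ^ (m - 1)" using ec True el(5) by (simp add: edgecond_def)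
        finally have P: "prod_list (map d (tl xs)) = d (hd xs) ^ (m - 1)" .
        have "hd xs < n" using I el(5) by (auto simp: idx_lists_def)
        hence "d (hd xs) \<noteq> 0" using nz by auto
        thus ?thesis using P by simp
      qed
    qed
    thus "d \<in> {d :: nat \<Rightarrow> complex.
      (\<forall>i<n. d i \<noteq> 0) \<and> (\<forall>i\<ge>n. d i = 1) \<and> d 0 = 1 \<and>
      (\<forall>is\<in>idx_lists n m. complex_of_real (adj_tensor m E is) =
          inverse (d (hd is) ^ (m - 1)) * complex_of_real (adj_tensor m E is) * prod_list (map d (tl is)))}"
      using nz rest by simp
  qed
  thus ?thesis unfolding stabilizing_index_def by simp
qed

end


lemma mult_pow_pred: "(k::nat) \<ge> 1 \<Longrightarrow> (z::'a::comm_monoid_mult) * z ^ (k - 1) = z ^ k"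
  by (cases k) simp_all

context hg
begin

lemma prod_edge_split:
  assumes "e \<in> E" "i \<in> e" shows "(\<Prod>j\<in>e. f j) = f i * (\<Prod>j\<in>e-{i}. f j)"
  using prod.remove[OF edge_fin[OF assms(1)] assms(2)] .

lemma Sset_pow:
  assumes d: "d \<in> Sset" shows "d i ^ m = 1"
proof (cases "i < n")
  case True
  have ec: "edgecond d" using d by (simp add: Sset_def)
  have pe: "(\<Prod>j\<in>e. d j) = d u ^ m" if "e \<in> E" "u \<in> e" for e u
  proof -
    have "(\<Prod>j\<in>e. d j) = d u * (\<Prod>j\<in>e-{u}. d j)" by (rule prod_edge_split[OF that])
    also have "\<dots> = d u * d u ^ (m - 1)" using ec that by (simp add: edgecond_def)
    also have "\<dots> = d u ^ m" using mult_pow_pred[of m] m2 by simp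
    finally show ?thesis .
  qed
  show ?thesis
  proof (rule conn_prop[where Q = "\<lambda>u. d u ^ m = 1"])
    fix e u v assume "e \<in> E" "u \<in> e" "v \<in> e" "d u ^ m = 1"
    thus "d v ^ m = 1" using pe by metis
  next
    show "d 0 ^ m = 1" using d by (simp add: Sset_def)
  qed (use True in auto)
next
  case False thus ?thesis using d by (simp add: Sset_def)
qed

lemma Sset_edge_prod:
  assumes d: "d \<in> Sset" and e: "e \<in> E" shows "(\<Prod>j\<in>e. d j) = 1"
proof -
  have "card e = m" using edge_card[OF e] .
  hence "e \<noteq> {}" using m2 by auto
  then obtain u where u: "u \<in> e" by auto
  have ec: "edgecond d" using d by (simp add: Sset_def)
  have "(\<Prod>j\<in>e. d j) = d u * (\<Prod>j\<in>e-{u}. d j)" by (rule prod_edge_split[OF e u])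
  also have "\<dots> = d u * d u ^ (m - 1)" using ec e u by (simp add: edgecond_def)
  also have "\<dots> = d u ^ m" using mult_pow_pred[of m] m2 by simp
  finally show ?thesis using Sset_pow[OF d] by simp
qed

lemma Sset_good: "good_set m Sset"
  unfolding good_set_def
proof (intro conjI ballI allI)
  show "(\<lambda>i. 1) \<in> Sset" using m2 by (simp add: Sset_def edgecond_def)
  fix a b assume a: "a \<in> Sset" and b: "b \<in> Sset"
  show "(\<lambda>i. a i * b i) \<in> Sset"
    using a b by (simp add: Sset_def edgecond_def prod.distrib power_mult_distrib)
next
  fix a i assume "a \<in> Sset" thus "a i ^ m = 1" by (rule Sset_pow)
qed

lemma path_len_lt:
  assumes "is_path n E vs es" shows "length es < n"
proof -
  have "length vs = card (set vs)" using assms by (simp add: is_path_def distinct_card)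
  also have "\<dots> \<le> card {..<n}" using assms by (intro card_mono) (auto simp: is_path_def)
  finally show ?thesis using assms by (simp add: is_path_def)
qed

lemma max_path:
  obtains vs es where "is_path n E vs es" "length es = max_path_length n E"
proof -
  define L where "L = {length es | vs es. is_path n E vs es}"
  have "L \<subseteq> {..<n}" using path_len_lt by (auto simp: L_def)
  hence fin: "finite L" using finite_subset by blast
  have "is_path n E [0] []" using n1 by (simp add: is_path_def)
  hence "0 \<in> L" unfolding L_def by force
  hence "Max L \<in> L" using fin Max_in by blast
  thus ?thesis using that unfolding L_def max_path_length_def by auto
qed

lemma path_det:
  assumes path: "is_path n E vs es"
    and qe: "\<And>e. e \<in> E \<Longrightarrow> (\<Prod>j\<in>e. q j) = (1::complex)"
    and qC: "\<And>j. j < n \<Longrightarrow> j \<notin> set (take (length es) vs) \<Longrightarrow> q j = 1"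
    and j: "j < n"
  shows "q j = 1"
proof -
  define l where "l = length es"
  have lv: "length vs = Suc l" using path by (simp add: is_path_def l_def)
  have key: "q (vs ! k) = 1" if "k < l" for k
    using that
  proof (induction "l - k" arbitrary: k rule: less_induct)
    case less
    define e where "e = es ! k"
    have eE: "e \<in> E" using path less.prems by (auto simp: is_path_def e_def l_def)
    have vk: "vs ! k \<in> e" using path less.prems by (auto simp: is_path_def e_def l_def)
    have "(\<Prod>j\<in>e-{vs ! k}. q j) = 1"
    proof (rule prod.neutral, rule ballI)
      fix u assume u: "u \<in> e - {vs ! k}"
      have un: "u < n" using edge_sub[OF eE] u by auto
      show "q u = 1"
      proof (cases "u \<in> set (take l vs)")
        case False thus ?thesis using qC un l_def by simp
      next
        case True
        then obtain k' where k': "k' < l" "vs ! k' = u"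
          using lv by (auto simp: in_set_conv_nth)
        have "k' \<noteq> k" using k' u by auto
        moreover have "\<not> k' < k"
        proof
          assume "k' < k"
          hence "vs ! k' \<notin> es ! k" using path less.prems by (auto simp: is_path_def l_def)
          thus False using k' u by (auto simp: e_def)
        qed
        ultimately have "k < k'" by simp
        hence "q (vs ! k') = 1" using less.hyps[of k'] k' by simp
        thus ?thesis using k' by simp
      qed
    qed
    moreover have "(\<Prod>j\<in>e. q j) = q (vs ! k) * (\<Prod>j\<in>e-{vs ! k}. q j)"
      by (rule prod_edge_split[OF eE vk])
    ultimately show ?case using qe[OF eE] by simp
  qed
  show ?thesis
  proof (cases "j \<in> set (take l vs)")
    case False thus ?thesis using qC j l_def by simp
  next
    case True
    then obtain k where "k < l" "vs ! k = j" using lv by (auto simp: in_set_conv_nth)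
    thus ?thesis using key by auto
  qed
qed

lemma card_Sset_dvd:
  assumes path: "is_path n E vs es"
  shows "card Sset dvd m ^ (n - length es - 1)"
proof -
  define l where "l = length es"
  define P where "P = set (take l vs)"
  define C where "C = {..<n} - P"
  have lv: "length vs = Suc l" using path by (simp add: is_path_def l_def)
  have Psub: "P \<subseteq> {..<n}" using path by (auto simp: P_def is_path_def dest: in_set_takeD)
  have cardP: "card P = l" unfolding P_def using path lv by (simp add: is_path_def distinct_card)
  have ln: "l < n" using path_len_lt[OF path] l_def by simp
  have cardC: "card C = n - l" unfolding C_def using Psub cardP by (simp add: card_Diff_subset finite_subset)
  hence "C \<noteq> {}" using ln by auto
  then obtain c0 where c0: "c0 \<in> C" by auto
  define C' where "C' = C - {c0}"
  have finC: "finite C" by (simp add: C_def)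
  have cardC': "card C' = n - l - 1" unfolding C'_def using cardC c0 finC by simp
  have c0n: "c0 < n" using c0 by (simp add: C_def)
  define psi where "psi = (\<lambda>d::nat \<Rightarrow> complex. \<lambda>j. if j \<in> C' then d j / d c0 else 1)"
  define R where "R = {z::complex. z ^ m = 1}"
  define M where "M = {f::nat \<Rightarrow> complex. \<forall>j. (j \<in> C' \<longrightarrow> f j ^ m = 1) \<and> (j \<notin> C' \<longrightarrow> f j = 1)}"
  have m0: "m > 0" using m2 by simp
  have cardR: "card R = m" unfolding R_def by (rule card_roots_unity_eq[OF m0])
  hence finR: "finite R" using m0 card_ge_0_finite by metis
  have finC': "finite C'" using finC by (simp add: C'_def)
  define ext where "ext = (\<lambda>g::nat \<Rightarrow> complex. \<lambda>j. if j \<in> C' then g j else 1)"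
  have M_img: "M = ext ` (PiE C' (\<lambda>_. R))"
  proof (intro Set.set_eqI iffI)
    fix f assume f: "f \<in> M"
    have "f = ext (restrict f C')" using f by (auto simp: ext_def M_def)
    moreover have "restrict f C' \<in> PiE C' (\<lambda>_. R)" using f by (auto simp: M_def R_def)
    ultimately show "f \<in> ext ` (PiE C' (\<lambda>_. R))" by blast
  next
    fix f assume "f \<in> ext ` (PiE C' (\<lambda>_. R))"
    thus "f \<in> M" by (auto simp: ext_def M_def R_def PiE_def)
  qed
  have inj_ext: "inj_on ext (PiE C' (\<lambda>_. R))"
  proof (rule inj_onI)
    fix f g assume f: "f \<in> PiE C' (\<lambda>_. R)" and g: "g \<in> PiE C' (\<lambda>_. R)" and eq: "ext f = ext g"
    show "f = g"
    proof
      fix j show "f j = g j"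
        using f g fun_cong[OF eq, of j] by (cases "j \<in> C'") (auto simp: ext_def PiE_def extensional_def)
    qed
  qed
  have cardM: "card M = m ^ (n - l - 1)"
    using M_img card_image[OF inj_ext] card_PiE[OF finC', of "\<lambda>_. R"] cardR cardC' by simp
  have finM: "finite M" using M_img finite_PiE[OF finC', of "\<lambda>_. R"] finR by simp
  have goodM: "good_set m M" unfolding good_set_def M_def by (auto simp: power_mult_distrib) (metis power_one)
  have Sset_nz: "d j \<noteq> 0" if "d \<in> Sset" "j < n" for d j using that by (simp add: Sset_def)
  have psiM: "psi ` Sset \<subseteq> M"
  proof
    fix f assume "f \<in> psi ` Sset"
    then obtain d where d: "d \<in> Sset" "f = psi d" by auto
    show "f \<in> M" using d Sset_pow[OF d(1)] by (auto simp: M_def psi_def power_divide)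
  qed
  have good_psi: "good_set m (psi ` Sset)" unfolding good_set_def
  proof (intro conjI ballI allI)
    have "psi (\<lambda>i. 1) = (\<lambda>i. 1)" by (auto simp: psi_def)
    moreover have "(\<lambda>i. 1) \<in> Sset" using Sset_good by (simp add: good_set_def)
    ultimately show "(\<lambda>i. 1) \<in> psi ` Sset" by force
  next
    fix a b assume a: "a \<in> psi ` Sset" and b: "b \<in> psi ` Sset"
    then obtain da db where d: "da \<in> Sset" "db \<in> Sset" "a = psi da" "b = psi db" by auto
    have "(\<lambda>i. da i * db i) \<in> Sset" using Sset_good d by (simp add: good_set_def)
    moreover have "psi (\<lambda>i. da i * db i) = (\<lambda>i. a i * b i)" using d by (auto simp: psi_def)
    ultimately show "(\<lambda>i. a i * b i) \<in> psi ` Sset" by force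
  next
    fix a i assume "a \<in> psi ` Sset" thus "a i ^ m = 1" using psiM goodM by (auto simp: good_set_def)
  qed
  have inj_psi: "inj_on psi Sset"
  proof (rule inj_onI)
    fix d d' assume d: "d \<in> Sset" and d': "d' \<in> Sset" and eq: "psi d = psi d'"
    define w where "w = d' c0 / d c0"
    have dc0: "d c0 \<noteq> 0" "d' c0 \<noteq> 0" using Sset_nz d d' c0n by auto
    have w0: "w \<noteq> 0" using dc0 by (simp add: w_def)
    have wm: "w ^ m = 1" using Sset_pow[OF d] Sset_pow[OF d'] by (simp add: w_def power_divide)
    define q where "q = (\<lambda>j. d' j / (w * d j))"
    have qe: "(\<Prod>j\<in>e. q j) = 1" if e: "e \<in> E" for e
    proof -
      have "(\<Prod>j\<in>e. q j) = (\<Prod>j\<in>e. d' j) / (\<Prod>j\<in>e. w * d j)"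
        unfolding q_def by (rule prod_dividef)
      also have "(\<Prod>j\<in>e. w * d j) = w ^ card e * (\<Prod>j\<in>e. d j)"
        by (simp add: prod.distrib)
      finally show ?thesis using Sset_edge_prod[OF d e] Sset_edge_prod[OF d' e] edge_card[OF e] wm by simp
    qed
    have qC: "q j = 1" if "j < n" "j \<notin> set (take (length es) vs)" for j
    proof -
      have jC: "j \<in> C" using that by (simp add: C_def P_def l_def)
      have dj: "d j \<noteq> 0" using Sset_nz d that by auto
      show ?thesis
      proof (cases "j = c0")
        case True thus ?thesis using dc0 by (simp add: q_def w_def)
      next
        case False
        hence "j \<in> C'" using jC by (simp add: C'_def)
        hence "d j / d c0 = d' j / d' c0" using fun_cong[OF eq, of j] by (simp add: psi_def)
        hence "d' j = w * d j" using dc0 dj by (simp add: w_def field_simps)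
        thus ?thesis using w0 dj by (simp add: q_def)
      qed
    qed
    have all: "q j = 1" if "j < n" for j by (rule path_det[OF path qe qC that])
    have "q 0 = 1" using all n1 by simp
    hence "w = 1" using d d' by (simp add: q_def Sset_def)
    show "d = d'"
    proof
      fix j show "d j = d' j"
      proof (cases "j < n")
        case True
        hence "q j = 1" using all by simp
        moreover have "d j \<noteq> 0" using Sset_nz d True by auto
        ultimately show ?thesis using \<open>w = 1\<close> by (simp add: q_def)
      next
        case False thus ?thesis using d d' by (simp add: Sset_def)
      qed
    qed
  qed
  have "card (psi ` Sset) dvd card M" by (rule good_card_dvd[OF good_psi goodM psiM]) (use m2 in simp)
  thus ?thesis using card_image[OF inj_psi] cardM l_def by simp
qed

end

context hg
begin

definition Fr :: "(nat \<Rightarrow> real) \<Rightarrow> real" where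
  "Fr x = (\<Sum>e\<in>E. \<Prod>j\<in>e. x j)"
definition Ar :: "(nat \<Rightarrow> real) \<Rightarrow> nat \<Rightarrow> real" where
  "Ar x i = (\<Sum>e\<in>{e\<in>E. i \<in> e}. \<Prod>j\<in>e-{i}. x j)"
definition nm :: "(nat \<Rightarrow> real) \<Rightarrow> real" where
  "nm x = (\<Sum>i<n. x i ^ m)"
definition K :: "(nat \<Rightarrow> real) set" where
  "K = {x. (\<forall>i<n. 0 \<le> x i) \<and> (\<forall>i\<ge>n. x i = 0) \<and> nm x = 1}"

lemma K_le1: assumes "x \<in> K" "i < n" shows "x i \<le> 1"
proof (rule ccontr)
  assume "\<not> x i \<le> 1"
  hence "1 < x i ^ m" using m2 by (simp add: one_less_power)
  also have "x i ^ m \<le> nm x" unfolding nm_def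
    using assms by (intro member_le_sum) (auto simp: K_def)
  finally show False using assms by (simp add: K_def)
qed

lemma K_compact: "compact K"
proof -
  define B where "B = PiE UNIV (\<lambda>i::nat. if i < n then {0..1::real} else {0})"
  have "compactin (product_topology (\<lambda>i. euclidean) UNIV) B"
    unfolding B_def by (subst compactin_PiE) auto
  hence cB: "compact B" by (simp add: euclidean_product_topology)
  have c: "\<And>j. continuous_on UNIV (\<lambda>x::nat\<Rightarrow>real. x j)"
    by (rule continuous_on_product_then_coordinatewise[OF continuous_on_id])
  have cont_nm: "continuous_on UNIV nm" unfolding nm_def
    by (intro continuous_on_sum continuous_on_power c)
  have cl: "closed {x. nm x = 1}" by (rule closed_Collect_eq[OF cont_nm]) simp
  have "K = B \<inter> {x. nm x = 1}"
  proof (intro Set.set_eqI iffI)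
    fix x assume x: "x \<in> K"
    thus "x \<in> B \<inter> {x. nm x = 1}" using K_le1[OF x] by (auto simp: K_def B_def)
  next
    fix x assume "x \<in> B \<inter> {x. nm x = 1}"
    thus "x \<in> K" by (auto simp: K_def B_def split: if_splits)
  qed
  thus ?thesis using compact_Int_closed[OF cB cl] by simp
qed

lemma Fr_cont: "continuous_on S Fr"
proof -
  have c: "\<And>j. continuous_on S (\<lambda>x::nat\<Rightarrow>real. x j)"
    by (rule continuous_on_product_then_coordinatewise[OF continuous_on_id])
  show ?thesis unfolding Fr_def by (intro continuous_on_sum continuous_on_prod c)
qed

lemma K_ne: "(\<lambda>i. if i = 0 then 1 else 0) \<in> K"
proof -
  have "(\<Sum>i<n. (if i = 0 then 1 else 0::real) ^ m) = (\<Sum>i<n. if i = 0 then 1 else 0)"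
    by (rule sum.cong) (use m2 in auto)
  also have "\<dots> = 1" using n1 by (simp add: sum.delta)
  finally show ?thesis using n1 by (auto simp: K_def nm_def)
qed

lemma exists_max: obtains x where "x \<in> K" "\<And>y. y \<in> K \<Longrightarrow> Fr y \<le> Fr x"
  using continuous_attains_sup[OF K_compact _ Fr_cont] K_ne by blast

lemma conn_prop':
  assumes step: "\<And>e u v. e \<in> E \<Longrightarrow> u \<in> e \<Longrightarrow> v \<in> e \<Longrightarrow> Q u \<Longrightarrow> Q v"
    and qp: "Q p" and p: "p < n" and j: "j < n"
  shows "Q j"
proof -
  have "(p, j) \<in> (hg_adj E)\<^sup>*" using conn p j unfolding hg_connected_def by auto
  thus ?thesis
  proof (induction rule: rtrancl_induct)
    case base then show ?case using qp .
  next
    case (step y z)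
    then obtain e where "e \<in> E" "y \<in> e" "z \<in> e" by (auto simp: hg_adj_def)
    thus ?case using assms(1) step.IH by blast
  qed
qed

lemma edge_ne: "e \<in> E \<Longrightarrow> e \<noteq> {}"
  using edge_card m2 by fastforce

lemma Fr_zero: assumes "\<forall>i<n. z i = 0" shows "Fr z = 0"
  unfolding Fr_def
proof (rule sum.neutral, rule ballI)
  fix e assume e: "e \<in> E"
  then obtain u where "u \<in> e" using edge_ne by blast
  moreover have "u < n" using calculation edge_sub[OF e] by auto
  ultimately show "(\<Prod>j\<in>e. z j) = 0" using assms edge_fin[OF e] by (metis prod_zero_iff)
qed

lemma Fr_nonneg: assumes "\<forall>i<n. 0 \<le> z i" shows "0 \<le> Fr z"
  unfolding Fr_def using assms edge_sub by (intro sum_nonneg prod_nonneg) blast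

lemma Ar_nonneg: assumes "\<forall>i<n. 0 \<le> z i" shows "0 \<le> Ar z i"
  unfolding Ar_def using assms edge_sub by (intro sum_nonneg prod_nonneg) blast

definition xm :: "nat \<Rightarrow> real" where
  "xm = (SOME x. x \<in> K \<and> (\<forall>y\<in>K. Fr y \<le> Fr x))"
definition mu :: real where "mu = Fr xm"

lemma xm_K: "xm \<in> K" and xm_max: "y \<in> K \<Longrightarrow> Fr y \<le> mu"
proof -
  have "\<exists>x. x \<in> K \<and> (\<forall>y\<in>K. Fr y \<le> Fr x)" using exists_max by metis
  hence "xm \<in> K \<and> (\<forall>y\<in>K. Fr y \<le> Fr xm)" unfolding xm_def by (rule someI_ex)
  thus "xm \<in> K" "y \<in> K \<Longrightarrow> Fr y \<le> mu" by (auto simp: mu_def)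
qed

lemma mu_nonneg: "0 \<le> mu"
  unfolding mu_def using xm_K by (intro Fr_nonneg) (auto simp: K_def)

lemma Fr_cong: assumes "\<forall>i<n. z i = z' i" shows "Fr z = Fr z'"
  unfolding Fr_def using assms edge_sub by (intro sum.cong prod.cong) auto

lemma Fr_le: assumes z: "\<forall>i<n. 0 \<le> z i" shows "Fr z \<le> mu * nm z"
proof -
  have nmnn: "0 \<le> nm z" unfolding nm_def using z by (auto intro: sum_nonneg)
  show ?thesis
  proof (cases "nm z = 0")
    case True
    have "\<forall>i\<in>{..<n}. z i ^ m = 0"
      using True z unfolding nm_def by (subst sum_nonneg_eq_0_iff[symmetric]) auto
    hence "\<forall>i<n. z i = 0" by simp
    thus ?thesis using Fr_zero True by simp
  next
    case False
    hence pos: "0 < nm z" using nmnn by simp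
    define t where "t = root m (nm z)"
    have m0: "0 < m" using m2 by simp
    have t0: "0 < t" unfolding t_def using pos m0 by simp
    have tm: "t ^ m = nm z" unfolding t_def using pos m0 by (simp add: real_root_pow_pos)
    define z' where "z' = (\<lambda>i. if i < n then z i / t else 0)"
    have "nm z' = (\<Sum>i<n. z i ^ m / t ^ m)" unfolding nm_def z'_def
      by (rule sum.cong) (auto simp: power_divide)
    also have "\<dots> = nm z / t ^ m" unfolding nm_def by (simp add: sum_divide_distrib)
    also have "\<dots> = 1" using tm pos by simp
    finally have "z' \<in> K" using z t0 by (auto simp: K_def z'_def)
    hence le: "Fr z' \<le> mu" by (rule xm_max)
    have "Fr z' = (\<Sum>e\<in>E. (\<Prod>j\<in>e. z j) / t ^ m)" unfolding Fr_def
    proof (rule sum.cong[OF refl])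
      fix e assume e: "e \<in> E"
      have "(\<Prod>j\<in>e. z' j) = (\<Prod>j\<in>e. z j / t)"
        using edge_sub[OF e] by (intro prod.cong) (auto simp: z'_def)
      also have "\<dots> = (\<Prod>j\<in>e. z j) / t ^ card e" by (simp add: prod_dividef)
      finally show "(\<Prod>j\<in>e. z' j) = (\<Prod>j\<in>e. z j) / t ^ m" using edge_card[OF e] by simp
    qed
    also have "\<dots> = Fr z / t ^ m" unfolding Fr_def by (simp add: sum_divide_distrib)
    finally have "Fr z / t ^ m \<le> mu" using le by simp
    thus ?thesis using tm pos by (simp add: divide_le_eq mult.commute)
  qed
qed

end

context hg
begin

lemma xm_nonneg: "i < n \<Longrightarrow> 0 \<le> xm i" using xm_K by (simp add: K_def)

lemma mixed_edge:
  assumes j: "j < n" "xm j = 0"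
  shows "\<exists>e\<in>E. \<exists>a\<in>e. \<exists>b\<in>e. xm a = 0 \<and> 0 < xm b"
proof (rule ccontr)
  assume H: "\<not> ?thesis"
  have "xm i = 0" if i: "i < n" for i
  proof (rule conn_prop'[where Q = "\<lambda>u. xm u = 0", OF _ j(2) j(1) i])
    fix e u v assume "e \<in> E" "u \<in> e" "v \<in> e" "xm u = 0"
    moreover have "0 \<le> xm v" using xm_nonneg edge_sub calculation by blast
    ultimately show "xm v = 0" using H by force
  qed
  hence "nm xm = 0" unfolding nm_def using m2 by simp
  thus False using xm_K by (simp add: K_def)
qed

lemma xm_pos: assumes i: "i < n" shows "0 < xm i"
proof (rule ccontr)
  assume "\<not> 0 < xm i"
  hence "xm i = 0" using xm_nonneg[OF i] by simp
  then obtain e a b where e: "e \<in> E" "a \<in> e" "b \<in> e" "xm a = 0" "0 < xm b"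
    using mixed_edge[OF i] by blast
  define Z where "Z = {u\<in>e. xm u = 0}"
  define k where "k = card Z"
  have finZ: "finite Z" using edge_fin[OF e(1)] by (simp add: Z_def)
  have Ze: "Z \<subseteq> e" by (auto simp: Z_def)
  have "b \<notin> Z" using e by (simp add: Z_def)
  hence "Z \<subset> e" using Ze e(3) by blast
  hence "k < m" unfolding k_def using edge_card[OF e(1)] edge_fin[OF e(1)] psubset_card_mono by metis
  have k1: "1 \<le> k" unfolding k_def using finZ e by (auto simp: Z_def card_gt_0_iff Suc_le_eq)
  have eZn: "\<And>u. u \<in> e \<Longrightarrow> u < n" using edge_sub[OF e(1)] by auto
  define c where "c = (\<Prod>u\<in>e-Z. xm u)"
  have c0: "0 < c" unfolding c_def
  proof (rule prod_pos)
    fix u assume "u \<in> e - Z"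
    thus "0 < xm u" using xm_nonneg eZn by (force simp: Z_def)
  qed
  define t where "t = c / (mu * k + c + 1)"
  have den: "0 < mu * k + c + 1" using mu_nonneg c0 by (simp add: add_nonneg_pos)
  have t0: "0 < t" unfolding t_def using c0 den by simp
  have t1: "t \<le> 1" unfolding t_def using den mu_nonneg by (simp add: divide_le_eq)
  have tlt: "mu * k * t < c"
  proof -
    have "t * (mu * k + c + 1) = c" unfolding t_def using den by simp
    hence "mu * k * t = c - t * (c + 1)" by (simp add: algebra_simps)
    moreover have "0 < t * (c + 1)" using t0 c0 by simp
    ultimately show ?thesis by simp
  qed
  define z where "z = (\<lambda>u. xm u + (if u \<in> Z then t else 0))"
  have znn: "\<forall>i<n. 0 \<le> z i" using xm_nonneg t0 by (simp add: z_def)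
  have xz: "\<And>u. u < n \<Longrightarrow> xm u \<le> z u" using t0 by (simp add: z_def)
  have Fz: "mu + t ^ k * c \<le> Fr z"
  proof -
    have finE': "finite E" by (rule finE)
    have "Fr z = (\<Prod>j\<in>e. z j) + (\<Sum>e'\<in>E-{e}. \<Prod>j\<in>e'. z j)"
      unfolding Fr_def by (rule sum.remove[OF finE' e(1)])
    moreover have "Fr xm = (\<Prod>j\<in>e. xm j) + (\<Sum>e'\<in>E-{e}. \<Prod>j\<in>e'. xm j)"
      unfolding Fr_def by (rule sum.remove[OF finE' e(1)])
    moreover have "(\<Prod>j\<in>e. xm j) = 0" using e edge_fin[OF e(1)] by (metis prod_zero_iff)
    moreover have "(\<Sum>e'\<in>E-{e}. \<Prod>j\<in>e'. xm j) \<le> (\<Sum>e'\<in>E-{e}. \<Prod>j\<in>e'. z j)"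
    proof (rule sum_mono, rule prod_mono)
      fix e' j assume "e' \<in> E - {e}" "j \<in> e'"
      hence "j < n" using edge_sub by blast
      thus "0 \<le> xm j \<and> xm j \<le> z j" using xm_nonneg xz by simp
    qed
    moreover have "(\<Prod>j\<in>e. z j) = t ^ k * c"
    proof -
      have "(\<Prod>j\<in>e. z j) = (\<Prod>j\<in>Z. z j) * (\<Prod>j\<in>e-Z. z j)"
        using prod.subset_diff[OF Ze edge_fin[OF e(1)]] by (simp add: mult.commute)
      moreover have "(\<Prod>j\<in>Z. z j) = t ^ k"
        unfolding k_def by (subst prod.cong[OF refl, of Z _ "\<lambda>_. t"]) (auto simp: z_def Z_def)
      moreover have "(\<Prod>j\<in>e-Z. z j) = c" unfolding c_def by (rule prod.cong) (auto simp: z_def)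
      ultimately show ?thesis by simp
    qed
    ultimately show ?thesis unfolding mu_def by linarith
  qed
  have nz: "nm z = 1 + k * t ^ m"
  proof -
    have "nm z = (\<Sum>u<n. xm u ^ m + (if u \<in> Z then t ^ m else 0))" unfolding nm_def
      by (rule sum.cong) (use m2 in \<open>auto simp: z_def Z_def\<close>)
    also have "\<dots> = nm xm + (\<Sum>u<n. if u \<in> Z then t ^ m else 0)" by (simp add: sum.distrib nm_def)
    also have "(\<Sum>u<n. if u \<in> Z then t ^ m else 0) = (\<Sum>u\<in>{u\<in>{..<n}. u \<in> Z}. t ^ m)"
      by (rule sum.inter_filter[symmetric]) simp
    also have "{u\<in>{..<n}. u \<in> Z} = Z" using Ze eZn by auto
    finally show ?thesis using xm_K k_def by (simp add: K_def)
  qed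
  have "t ^ k * c \<le> mu * k * t ^ m" using Fr_le[OF znn] Fz nz by (simp add: algebra_simps)
  also have "t ^ m \<le> t ^ (k + 1)" using t0 t1 \<open>k < m\<close> by (intro power_decreasing) auto
  hence "mu * k * t ^ m \<le> mu * k * t ^ (k + 1)" using mu_nonneg by (intro mult_left_mono) auto
  finally have "t ^ k * c \<le> t ^ k * (mu * k * t)" by (simp add: algebra_simps)
  hence "c \<le> mu * k * t" using t0 by simp
  thus False using tlt by simp
qed

lemma Fr_upd: "Fr (x(i := x i + s)) = Fr x + s * Ar x i"
proof -
  have "Fr (x(i := x i + s)) = (\<Sum>e\<in>E. (\<Prod>j\<in>e. x j) + (if i \<in> e then s * (\<Prod>j\<in>e-{i}. x j) else 0))"
    unfolding Fr_def
  proof (rule sum.cong[OF refl])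
    fix e assume e: "e \<in> E"
    show "(\<Prod>j\<in>e. (x(i := x i + s)) j) = (\<Prod>j\<in>e. x j) + (if i \<in> e then s * (\<Prod>j\<in>e-{i}. x j) else 0)"
    proof (cases "i \<in> e")
      case True
      have "(\<Prod>j\<in>e. (x(i := x i + s)) j) = (x(i := x i + s)) i * (\<Prod>j\<in>e-{i}. (x(i := x i + s)) j)"
        by (rule prod_edge_split[OF e True])
      hence "(\<Prod>j\<in>e. (x(i := x i + s)) j) = (x i + s) * (\<Prod>j\<in>e-{i}. (x(i := x i + s)) j)"
        by simp
      moreover have "(\<Prod>j\<in>e-{i}. (x(i := x i + s)) j) = (\<Prod>j\<in>e-{i}. x j)" by (rule prod.cong) auto
      ultimately have p1: "(\<Prod>j\<in>e. (x(i := x i + s)) j) = (x i + s) * (\<Prod>j\<in>e-{i}. x j)" by simp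
      have p2: "(\<Prod>j\<in>e. x j) = x i * (\<Prod>j\<in>e-{i}. x j)" by (rule prod_edge_split[OF e True])
      show ?thesis using True by (simp only: p1 p2 distrib_right if_True)
    next
      case False
      have "(\<Prod>j\<in>e. (x(i := x i + s)) j) = (\<Prod>j\<in>e. x j)" by (rule prod.cong) (use False in auto)
      thus ?thesis using False by simp
    qed
  qed
  also have "\<dots> = Fr x + (\<Sum>e\<in>E. if i \<in> e then s * (\<Prod>j\<in>e-{i}. x j) else 0)"
    by (simp add: sum.distrib Fr_def)
  also have "(\<Sum>e\<in>E. if i \<in> e then s * (\<Prod>j\<in>e-{i}. x j) else 0) = s * Ar x i"
    unfolding Ar_def by (simp add: sum.inter_filter[OF finE, symmetric] sum_distrib_left if_distrib cong: if_cong)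
  finally show ?thesis .
qed

lemma nm_upd: assumes "i < n" shows "nm (x(i := v)) = nm x - x i ^ m + v ^ m"
proof -
  have "nm (x(i := v)) = (x(i := v)) i ^ m + (\<Sum>j\<in>{..<n}-{i}. (x(i := v)) j ^ m)"
    unfolding nm_def using assms by (intro sum.remove) auto
  also have "(\<Sum>j\<in>{..<n}-{i}. (x(i := v)) j ^ m) = (\<Sum>j\<in>{..<n}-{i}. x j ^ m)" by (rule sum.cong) auto
  moreover have "nm x = x i ^ m + (\<Sum>j\<in>{..<n}-{i}. x j ^ m)"
    unfolding nm_def using assms by (intro sum.remove) auto
  ultimately show ?thesis by simp
qed

lemma xm_eigen: assumes i: "i < n" shows "Ar xm i = m * mu * xm i ^ (m - 1)"
proof -
  define a where "a = Ar xm i"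
  define b where "b = xm i"
  have b0: "0 < b" using xm_pos[OF i] by (simp add: b_def)
  define h where "h = (\<lambda>s. s * a - mu * ((b + s) ^ m - b ^ m))"
  have "(h has_real_derivative (a - mu * (of_nat m * (b + 0) ^ (m - 1) * 1 - 0))) (at 0)"
    unfolding h_def by (auto intro!: derivative_eq_intros)
  hence D: "(h has_real_derivative (a - mu * m * b ^ (m - 1))) (at 0)" by (simp add: algebra_simps)
  have loc: "\<forall>y. \<bar>0 - y\<bar> < b \<longrightarrow> h y \<le> h 0"
  proof (intro allI impI)
    fix s assume "\<bar>0 - s\<bar> < b"
    hence sb: "0 \<le> b + s" by simp
    define y where "y = xm(i := xm i + s)"
    have ynn: "\<forall>j<n. 0 \<le> y j" using xm_nonneg sb by (simp add: y_def b_def)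
    have "Fr y = mu + s * a" unfolding y_def Fr_upd mu_def a_def by simp
    moreover have "nm y = 1 - b ^ m + (b + s) ^ m"
      unfolding y_def nm_upd[OF i] using xm_K by (simp add: K_def b_def)
    ultimately have "mu + s * a \<le> mu * (1 - b ^ m + (b + s) ^ m)" using Fr_le[OF ynn] by simp
    thus "h s \<le> h 0" unfolding h_def by (simp add: algebra_simps)
  qed
  have "a - mu * m * b ^ (m - 1) = 0" by (rule DERIV_local_max[OF D b0 loc])
  thus ?thesis by (simp add: a_def b_def)
qed

end

lemma cmod_Re_one: assumes "cmod z = 1" "Re z = 1" shows "z = 1"
proof -
  have "Re z ^ 2 + Im z ^ 2 = 1" using assms(1) cmod_power2[of z] by simp
  hence "Im z = 0" using assms(2) by simp
  thus ?thesis using assms(2) by (simp add: complex_eq_iff)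
qed

lemma unit_avg:
  fixes w :: "'a \<Rightarrow> real" and u :: "'a \<Rightarrow> complex"
  assumes fin: "finite A" and w: "\<And>a. a \<in> A \<Longrightarrow> 0 < w a" and u: "\<And>a. a \<in> A \<Longrightarrow> cmod (u a) = 1"
    and D: "cmod D = 1" and eq: "(\<Sum>a\<in>A. of_real (w a) * u a) = of_real (\<Sum>a\<in>A. w a) * D"
  shows "\<And>a. a \<in> A \<Longrightarrow> u a = D"
proof -
  have DD: "D * cnj D = 1" using complex_norm_square[of D] D by simp
  have "(\<Sum>a\<in>A. of_real (w a) * (u a * cnj D)) = (\<Sum>a\<in>A. of_real (w a) * u a) * cnj D"
    by (simp add: sum_distrib_right mult.assoc)
  also have "\<dots> = of_real (\<Sum>a\<in>A. w a)" using eq DD by (simp add: mult.assoc)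
  finally have "Re (\<Sum>a\<in>A. of_real (w a) * (u a * cnj D)) = (\<Sum>a\<in>A. w a)" by simp
  hence R: "(\<Sum>a\<in>A. w a * Re (u a * cnj D)) = (\<Sum>a\<in>A. w a)" by (simp add: Re_sum)
  have "(\<Sum>a\<in>A. w a * (1 - Re (u a * cnj D))) = (\<Sum>a\<in>A. w a) - (\<Sum>a\<in>A. w a * Re (u a * cnj D))"
    by (simp only: right_diff_distrib mult_1_right sum_subtractf)
  hence "(\<Sum>a\<in>A. w a * (1 - Re (u a * cnj D))) = 0" using R by simp
  moreover have nn: "\<forall>a\<in>A. 0 \<le> w a * (1 - Re (u a * cnj D))"
  proof
    fix a assume a: "a \<in> A"
    have "Re (u a * cnj D) \<le> cmod (u a * cnj D)" by (rule complex_Re_le_cmod)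
    also have "\<dots> = 1" using u[OF a] D by (simp add: norm_mult)
    finally show "0 \<le> w a * (1 - Re (u a * cnj D))" using w[OF a] by simp
  qed
  moreover have "(\<Sum>a\<in>A. w a * (1 - Re (u a * cnj D))) = 0 \<longleftrightarrow> (\<forall>a\<in>A. w a * (1 - Re (u a * cnj D)) = 0)"
    by (rule sum_nonneg_eq_0_iff[OF fin]) (use nn in auto)
  ultimately have z: "\<forall>a\<in>A. w a * (1 - Re (u a * cnj D)) = 0" by simp
  fix a assume a: "a \<in> A"
  have "w a * (1 - Re (u a * cnj D)) = 0" using z a by blast
  hence "1 - Re (u a * cnj D) = 0" using w[OF a] by (metis mult_eq_0_iff less_irrefl)
  hence "Re (u a * cnj D) = 1" by linarith
  moreover have "cmod (u a * cnj D) = 1" using u[OF a] D by (simp add: norm_mult)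
  ultimately have "u a * cnj D = 1" by (intro cmod_Re_one)
  hence "u a * cnj D * D = D" by simp
  hence "u a * (D * cnj D) = D" by (simp add: ac_simps)
  thus "u a = D" using DD by simp
qed

lemma prod_eq_le_imp_eq:
  fixes a b :: "'a \<Rightarrow> real"
  assumes fin: "finite A" and le: "\<And>j. j \<in> A \<Longrightarrow> 0 \<le> a j \<and> a j \<le> b j" and pos: "\<And>j. j \<in> A \<Longrightarrow> 0 < b j"
    and eq: "(\<Prod>j\<in>A. a j) = (\<Prod>j\<in>A. b j)" and j: "j \<in> A"
  shows "a j = b j"
proof (rule ccontr)
  assume "a j \<noteq> b j"
  hence lt: "a j < b j" using le[OF j] by simp
  have "(\<Prod>j\<in>A. a j) = a j * (\<Prod>j\<in>A-{j}. a j)" using prod.remove[OF fin j] .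
  also have "\<dots> \<le> a j * (\<Prod>j\<in>A-{j}. b j)"
    using le j by (intro mult_left_mono prod_mono) auto
  also have "\<dots> < b j * (\<Prod>j\<in>A-{j}. b j)"
    using lt pos by (intro mult_strict_right_mono prod_pos) auto
  also have "\<dots> = (\<Prod>j\<in>A. b j)" by (rule prod.remove[OF fin j, symmetric])
  finally show False using eq by simp
qed

context hg
begin

definition vv :: "nat \<Rightarrow> real" where "vv = (\<lambda>i. if i < n then xm i / xm 0 else 0)"
definition lam :: real where "lam = m * mu"

lemma xm0: "0 < xm 0" using xm_pos n1 by simp
lemma vv_pos: "i < n \<Longrightarrow> 0 < vv i" using xm_pos xm0 by (simp add: vv_def)
lemma vv0: "vv 0 = 1" using xm0 n1 by (simp add: vv_def)
lemma lam_nonneg: "0 \<le> lam" using mu_nonneg by (simp add: lam_def)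

lemma card_edge_minus: "e \<in> E \<Longrightarrow> i \<in> e \<Longrightarrow> card (e - {i}) = m - 1"
  using edge_card edge_fin by simp

lemma vv_eigen: assumes i: "i < n" shows "Ar vv i = lam * vv i ^ (m - 1)"
proof -
  have "Ar vv i = (\<Sum>e\<in>{e\<in>E. i \<in> e}. (\<Prod>j\<in>e-{i}. xm j) / xm 0 ^ (m - 1))"
    unfolding Ar_def
  proof (rule sum.cong[OF refl])
    fix e assume e: "e \<in> {e\<in>E. i \<in> e}"
    have "(\<Prod>j\<in>e-{i}. vv j) = (\<Prod>j\<in>e-{i}. xm j / xm 0)"
      using edge_sub e by (intro prod.cong) (auto simp: vv_def)
    also have "\<dots> = (\<Prod>j\<in>e-{i}. xm j) / xm 0 ^ card (e - {i})" by (simp add: prod_dividef)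
    finally show "(\<Prod>j\<in>e-{i}. vv j) = (\<Prod>j\<in>e-{i}. xm j) / xm 0 ^ (m - 1)"
      using edge_card e by simp
  qed
  also have "\<dots> = Ar xm i / xm 0 ^ (m - 1)" unfolding Ar_def by (simp add: sum_divide_distrib)
  also have "\<dots> = lam * vv i ^ (m - 1)" using xm_eigen[OF i] i by (simp add: lam_def vv_def power_divide)
  finally show ?thesis .
qed

lemma tensor_real:
  "tensor_apply n m (adj_tensor m E) (\<lambda>j. complex_of_real (z j)) i = complex_of_real (Ar z i)"
  unfolding tensor_formula Ar_def by simp

lemma Ar_sum: "(\<Sum>i<n. z i * Ar z i) = m * Fr z"
proof -
  have "(\<Sum>i<n. z i * Ar z i) = (\<Sum>i<n. \<Sum>e\<in>{e\<in>E. i \<in> e}. \<Prod>j\<in>e. z j)"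
    unfolding Ar_def sum_distrib_left
  proof (intro sum.cong refl)
    fix i e assume "e \<in> {e\<in>E. i \<in> e}"
    thus "z i * (\<Prod>j\<in>e-{i}. z j) = (\<Prod>j\<in>e. z j)" using prod_edge_split[of e i z] by simp
  qed
  also have "\<dots> = (\<Sum>e\<in>E. \<Sum>i\<in>{i\<in>{..<n}. i \<in> e}. \<Prod>j\<in>e. z j)"
    by (rule sum.swap_restrict) (simp_all add: finE)
  also have "\<dots> = (\<Sum>e\<in>E. of_nat m * (\<Prod>j\<in>e. z j))"
  proof (rule sum.cong[OF refl])
    fix e assume e: "e \<in> E"
    have "{i\<in>{..<n}. i \<in> e} = e" using edge_sub[OF e] by auto
    thus "(\<Sum>i\<in>{i\<in>{..<n}. i \<in> e}. \<Prod>j\<in>e. z j) = of_nat m * (\<Prod>j\<in>e. z j)" using edge_card[OF e] by simp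
  qed
  also have "\<dots> = m * Fr z" unfolding Fr_def by (simp add: sum_distrib_left)
  finally show ?thesis .
qed

end

context hg
begin

abbreviation "AT \<equiv> adj_tensor m E"
definition cv :: "nat \<Rightarrow> complex" where "cv = (\<lambda>i. complex_of_real (vv i))"

lemma vv_out: "i \<ge> n \<Longrightarrow> vv i = 0" by (simp add: vv_def)

lemma cv_eigen: "tensor_eigenpair n m AT (of_real lam) cv"
  unfolding tensor_eigenpair_def
proof (intro conjI allI impI)
  show "is_vec n cv" by (simp add: is_vec_def cv_def vv_out)
  show "\<exists>i<n. cv i \<noteq> 0" using n1 vv0 by (auto simp: cv_def intro!: exI[of _ 0])
  fix i assume i: "i < n"
  show "tensor_apply n m AT cv i = of_real lam * cv i ^ (m - 1)"
    unfolding cv_def tensor_real vv_eigen[OF i] by simp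
qed

lemma abs_bound:
  assumes ep: "tensor_eigenpair n m AT l y" and i: "i < n"
  shows "cmod l * cmod (y i) ^ (m - 1) \<le> Ar (\<lambda>j. cmod (y j)) i"
proof -
  have "cmod l * cmod (y i) ^ (m - 1) = cmod (tensor_apply n m AT y i)"
    using ep i by (simp add: tensor_eigenpair_def norm_mult norm_power)
  also have "\<dots> = cmod (\<Sum>e\<in>{e\<in>E. i \<in> e}. \<Prod>j\<in>e-{i}. y j)" by (simp add: tensor_formula)
  also have "\<dots> \<le> (\<Sum>e\<in>{e\<in>E. i \<in> e}. cmod (\<Prod>j\<in>e-{i}. y j))" by (rule norm_sum)
  also have "\<dots> = Ar (\<lambda>j. cmod (y j)) i" unfolding Ar_def by (simp add: prod_norm)
  finally show ?thesis .
qed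

lemma eig_le:
  assumes ep: "tensor_eigenpair n m AT l y"
  shows "cmod l \<le> lam"
proof -
  define ay where "ay = (\<lambda>j. cmod (y j))"
  have ann: "\<forall>i<n. 0 \<le> ay i" by (simp add: ay_def)
  have each: "cmod l * ay i ^ m \<le> ay i * Ar ay i" if i: "i < n" for i
  proof -
    have "cmod l * ay i ^ (m - 1) \<le> Ar ay i" using abs_bound[OF ep i] by (simp add: ay_def)
    hence "ay i * (cmod l * ay i ^ (m - 1)) \<le> ay i * Ar ay i" by (rule mult_left_mono) (simp add: ay_def)
    moreover have "ay i * (cmod l * ay i ^ (m - 1)) = cmod l * ay i ^ m"
    proof -
      have p: "ay i * ay i ^ (m - 1) = ay i ^ m" using mult_pow_pred[of m "ay i"] m2 by simp
      show ?thesis by (metis p mult.left_commute)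
    qed
    ultimately show ?thesis by linarith
  qed
  have "cmod l * nm ay = (\<Sum>i<n. cmod l * ay i ^ m)" by (simp add: nm_def sum_distrib_left)
  also have "\<dots> \<le> (\<Sum>i<n. ay i * Ar ay i)" by (rule sum_mono) (use each in auto)
  also have "\<dots> = m * Fr ay" by (rule Ar_sum)
  also have "\<dots> \<le> m * (mu * nm ay)" using Fr_le[OF ann] by (intro mult_left_mono) auto
  also have "\<dots> = lam * nm ay" by (simp add: lam_def)
  finally have le: "cmod l * nm ay \<le> lam * nm ay" .
  obtain i where i: "i < n" "y i \<noteq> 0" using ep by (auto simp: tensor_eigenpair_def)
  have "0 < nm ay" unfolding nm_def
    by (rule sum_pos2[of _ i]) (use i in \<open>auto simp: ay_def\<close>)
  thus ?thesis using le by simp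
qed

lemma rho_eq: "tensor_spectral_radius n m AT = lam"
  unfolding tensor_spectral_radius_def
proof (rule cSup_eq_maximum)
  show "lam \<in> {cmod lam' |lam'. \<exists>x. tensor_eigenpair n m AT lam' x}"
    using cv_eigen lam_nonneg by force
  fix x assume "x \<in> {cmod lam' |lam'. \<exists>x. tensor_eigenpair n m AT lam' x}"
  thus "x \<le> lam" using eig_le by auto
qed

lemma cv_rho: "cv \<in> rho_vecs n m AT"
  using cv_eigen vv0 by (simp add: rho_vecs_def rho_eq cv_def)

lemma Ar_scale: "Ar (\<lambda>j. t * z j) i = t ^ (m - 1) * Ar z i"
  unfolding Ar_def sum_distrib_left
proof (rule sum.cong[OF refl])
  fix e assume e: "e \<in> {e\<in>E. i \<in> e}"
  have "(\<Prod>j\<in>e-{i}. t * z j) = t ^ card (e - {i}) * (\<Prod>j\<in>e-{i}. z j)"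
    by (simp add: prod.distrib)
  thus "(\<Prod>j\<in>e-{i}. t * z j) = t ^ (m - 1) * (\<Prod>j\<in>e-{i}. z j)" using e edge_card edge_fin by simp
qed

lemma rho_abs:
  assumes y: "y \<in> rho_vecs n m AT" and i: "i < n"
  shows "cmod (y i) = vv i"
proof -
  have ep: "tensor_eigenpair n m AT (of_real lam) y" and y0: "y 0 = 1"
    using y by (auto simp: rho_vecs_def rho_eq)
  define ay where "ay = (\<lambda>j. cmod (y j))"
  have ann: "\<And>j. 0 \<le> ay j" by (simp add: ay_def)
  have bnd: "lam * ay u ^ (m - 1) \<le> Ar ay u" if "u < n" for u
    using abs_bound[OF ep that] lam_nonneg by (simp add: ay_def)
  define Rt where "Rt = (\<lambda>j. ay j / vv j) ` {..<n}"
  define t where "t = Max Rt"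
  have "0 \<in> {..<n}" using n1 by simp
  hence finR: "finite Rt" "Rt \<noteq> {}" by (auto simp: Rt_def)
  have le_t: "ay j \<le> t * vv j" if "j < n" for j
  proof -
    have "ay j / vv j \<le> t" unfolding t_def using finR that by (intro Max_ge) (auto simp: Rt_def)
    thus ?thesis using vv_pos[OF that] by (simp add: divide_le_eq)
  qed
  obtain p where p: "p < n" "ay p / vv p = t" using Max_in[OF finR] by (auto simp: t_def Rt_def)
  have Qp: "ay p = t * vv p" using p vv_pos[OF p(1)] by (simp add: field_simps)
  have t1: "1 \<le> t" using le_t[of 0] n1 vv0 y0 by (simp add: ay_def)
  have prp: "ay w = t * vv w" if e: "e \<in> E" "u \<in> e" "w \<in> e" and Qu: "ay u = t * vv u" for e u w
  proof (cases "w = u")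
    case True thus ?thesis using Qu by simp
  next
    case False
    have un: "u < n" using edge_sub e by blast
    define tv where "tv = (\<lambda>j. t * vv j)"
    define Eu where "Eu = {e\<in>E. u \<in> e}"
    have finEu: "finite Eu" using finE by (simp add: Eu_def)
    have term_le: "(\<Prod>j\<in>e'-{u}. ay j) \<le> (\<Prod>j\<in>e'-{u}. tv j)" if "e' \<in> Eu" for e'
      by (rule prod_mono) (use that edge_sub ann le_t in \<open>force simp: Eu_def tv_def\<close>)
    have "Ar tv u = t ^ (m - 1) * Ar vv u" unfolding tv_def by (rule Ar_scale)
    also have "\<dots> = lam * (t * vv u) ^ (m - 1)" using vv_eigen[OF un] by (simp add: power_mult_distrib)
    also have "\<dots> = lam * ay u ^ (m - 1)" using Qu by simp
    also have "\<dots> \<le> Ar ay u" by (rule bnd[OF un])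
    finally have "(\<Sum>e'\<in>Eu. \<Prod>j\<in>e'-{u}. tv j) - (\<Sum>e'\<in>Eu. \<Prod>j\<in>e'-{u}. ay j) \<le> 0"
      by (simp add: Ar_def Eu_def)
    hence S0: "(\<Sum>e'\<in>Eu. (\<Prod>j\<in>e'-{u}. tv j) - (\<Prod>j\<in>e'-{u}. ay j)) \<le> 0"
      by (simp add: sum_subtractf)
    have nn: "\<And>e'. e' \<in> Eu \<Longrightarrow> 0 \<le> (\<Prod>j\<in>e'-{u}. tv j) - (\<Prod>j\<in>e'-{u}. ay j)"
      using term_le by simp
    have "(\<Sum>e'\<in>Eu. (\<Prod>j\<in>e'-{u}. tv j) - (\<Prod>j\<in>e'-{u}. ay j)) = 0"
    proof -
      have "0 \<le> (\<Sum>e'\<in>Eu. (\<Prod>j\<in>e'-{u}. tv j) - (\<Prod>j\<in>e'-{u}. ay j))" by (rule sum_nonneg) (rule nn)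
      thus ?thesis using S0 by linarith
    qed
    moreover have "(\<Sum>e'\<in>Eu. (\<Prod>j\<in>e'-{u}. tv j) - (\<Prod>j\<in>e'-{u}. ay j)) = 0 \<longleftrightarrow>
        (\<forall>e'\<in>Eu. (\<Prod>j\<in>e'-{u}. tv j) - (\<Prod>j\<in>e'-{u}. ay j) = 0)"
      by (rule sum_nonneg_eq_0_iff[OF finEu]) (rule nn)
    ultimately have "\<forall>e'\<in>Eu. (\<Prod>j\<in>e'-{u}. tv j) - (\<Prod>j\<in>e'-{u}. ay j) = 0" by simp
    moreover have eEu: "e \<in> Eu" using e by (simp add: Eu_def)
    ultimately have eqp: "(\<Prod>j\<in>e-{u}. ay j) = (\<Prod>j\<in>e-{u}. tv j)" by simp
    show ?thesis
    proof (rule prod_eq_le_imp_eq[OF _ _ _ eqp, of w, unfolded tv_def])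
      show "finite (e - {u})" using edge_fin e by simp
      show "w \<in> e - {u}" using e False by simp
      fix j assume "j \<in> e - {u}"
      hence jn: "j < n" using edge_sub e by blast
      show "0 \<le> ay j \<and> ay j \<le> t * vv j" using ann le_t[OF jn] by simp
      show "0 < t * vv j" using t1 vv_pos[OF jn] by simp
    qed
  qed
  have all: "ay j = t * vv j" if "j < n" for j
    by (rule conn_prop'[where Q = "\<lambda>u. ay u = t * vv u", OF _ Qp p(1) that]) (use prp in blast)
  have "t = 1" using all[of 0] n1 vv0 y0 by (simp add: ay_def)
  thus ?thesis using all[OF i] by (simp add: ay_def)
qed

definition phi :: "(nat \<Rightarrow> complex) \<Rightarrow> nat \<Rightarrow> complex" where
  "phi y = (\<lambda>i. if i < n then sgn (y i) else 1)"

lemma sgn_decomp: "sgn z * complex_of_real (cmod z) = z"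
  by (cases "z = 0") (simp_all add: sgn_div_norm scaleR_conv_of_real)

lemma rho_decomp:
  assumes y: "y \<in> rho_vecs n m AT" and i: "i < n"
  shows "y i = phi y i * cv i" "cmod (phi y i) = 1"
proof -
  have "cmod (y i) = vv i" by (rule rho_abs[OF y i])
  thus "y i = phi y i * cv i" using sgn_decomp[of "y i"] i by (simp add: phi_def cv_def)
  have "y i \<noteq> 0" using \<open>cmod (y i) = vv i\<close> vv_pos[OF i] by auto
  thus "cmod (phi y i) = 1" using i by (simp add: phi_def norm_sgn)
qed

lemma rho_out: "y \<in> rho_vecs n m AT \<Longrightarrow> i \<ge> n \<Longrightarrow> y i = 0"
  by (simp add: rho_vecs_def tensor_eigenpair_def is_vec_def)

lemma phi_Sset:
  assumes y: "y \<in> rho_vecs n m AT"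
  shows "phi y \<in> Sset"
proof -
  have ep: "tensor_eigenpair n m AT (of_real lam) y" and y0: "y 0 = 1"
    using y by (auto simp: rho_vecs_def rho_eq)
  define d where "d = phi y"
  have yd: "\<And>j. j < n \<Longrightarrow> y j = d j * cv j" and nd: "\<And>j. j < n \<Longrightarrow> cmod (d j) = 1"
    using rho_decomp[OF y] by (auto simp: d_def)
  have ec: "edgecond d" unfolding edgecond_def
  proof (intro ballI)
    fix e i assume e: "e \<in> E" and ie: "i \<in> e"
    have i: "i < n" using edge_sub e ie by blast
    define Ei where "Ei = {e\<in>E. i \<in> e}"
    have "tensor_apply n m AT y i = of_real lam * y i ^ (m - 1)" using ep i by (simp add: tensor_eigenpair_def)
    moreover have "tensor_apply n m AT y i = (\<Sum>e'\<in>Ei. of_real (\<Prod>j\<in>e'-{i}. vv j) * (\<Prod>j\<in>e'-{i}. d j))"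
      unfolding tensor_formula Ei_def
    proof (rule sum.cong[OF refl])
      fix e' assume e': "e' \<in> {e\<in>E. i \<in> e}"
      have "(\<Prod>j\<in>e'-{i}. y j) = (\<Prod>j\<in>e'-{i}. d j * cv j)"
        using edge_sub e' yd by (intro prod.cong) auto
      thus "(\<Prod>j\<in>e'-{i}. y j) = of_real (\<Prod>j\<in>e'-{i}. vv j) * (\<Prod>j\<in>e'-{i}. d j)"
        by (simp add: prod.distrib cv_def mult.commute)
    qed
    moreover have "of_real lam * y i ^ (m - 1) = of_real (\<Sum>e'\<in>Ei. \<Prod>j\<in>e'-{i}. vv j) * d i ^ (m - 1)"
    proof -
      have "of_real lam * y i ^ (m - 1) = of_real (lam * vv i ^ (m - 1)) * d i ^ (m - 1)"
        using yd[OF i] by (simp add: cv_def power_mult_distrib)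
      also have "lam * vv i ^ (m - 1) = (\<Sum>e'\<in>Ei. \<Prod>j\<in>e'-{i}. vv j)"
        using vv_eigen[OF i] by (simp add: Ar_def Ei_def)
      finally show ?thesis .
    qed
    ultimately have eq: "(\<Sum>e'\<in>Ei. of_real (\<Prod>j\<in>e'-{i}. vv j) * (\<Prod>j\<in>e'-{i}. d j))
        = of_real (\<Sum>e'\<in>Ei. \<Prod>j\<in>e'-{i}. vv j) * d i ^ (m - 1)" by simp
    have "(\<Prod>j\<in>e-{i}. d j) = d i ^ (m - 1)"
    proof (rule unit_avg[OF _ _ _ _ eq])
      show "finite Ei" using finE by (simp add: Ei_def)
      show "e \<in> Ei" using e ie by (simp add: Ei_def)
      show "cmod (d i ^ (m - 1)) = 1" using nd[OF i] by (simp add: norm_power)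
      fix e' assume e': "e' \<in> Ei"
      have sub: "\<And>j. j \<in> e' - {i} \<Longrightarrow> j < n" using edge_sub e' by (auto simp: Ei_def)
      show "0 < (\<Prod>j\<in>e'-{i}. vv j)" using sub vv_pos by (intro prod_pos) auto
      have "cmod (\<Prod>j\<in>e'-{i}. d j) = (\<Prod>j\<in>e'-{i}. cmod (d j))" by (simp add: prod_norm)
      also have "\<dots> = 1" using sub nd by (intro prod.neutral) auto
      finally show "cmod (\<Prod>j\<in>e'-{i}. d j) = 1" .
    qed
    thus "(\<Prod>j\<in>e-{i}. d j) = d i ^ (m - 1)" .
  qed
  have "d 0 = 1" using yd[of 0] n1 y0 vv0 by (simp add: cv_def)
  moreover have "\<forall>i<n. d i \<noteq> 0" using nd by (metis norm_zero zero_neq_one)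
  moreover have "\<forall>i\<ge>n. d i = 1" by (simp add: d_def phi_def)
  ultimately show ?thesis using ec by (simp add: Sset_def d_def)
qed

end

lemma cl_mult: "(a::nat) \<noteq> 0 \<Longrightarrow> b \<noteq> 0 \<Longrightarrow> cl (a * b) = cl a + cl b"
  unfolding cl_def by (simp add: prime_factorization_mult)

lemma cl_ge1: assumes "(r::nat) \<ge> 2" shows "1 \<le> cl r"
proof -
  have "prime_factorization r \<noteq> {#}" using assms by (simp add: prime_factorization_empty_iff)
  thus ?thesis unfolding cl_def by (simp add: Suc_le_eq nonempty_has_size)
qed

lemma cl_dvd: assumes "(a::nat) dvd b" "b \<noteq> 0" shows "cl a \<le> cl b"
proof -
  obtain c where b: "b = a * c" using assms(1) by blast
  hence "a \<noteq> 0" "c \<noteq> 0" using assms(2) by auto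
  thus ?thesis using b cl_mult by simp
qed

lemma cl_pow: assumes "(a::nat) \<noteq> 0" shows "cl (a ^ k) = k * cl a"
proof (induction k)
  case 0 thus ?case by (simp add: cl_def)
next
  case (Suc k)
  have "cl (a ^ Suc k) = cl (a * a ^ k)" by simp
  also have "\<dots> = cl a + cl (a ^ k)" using assms by (intro cl_mult) auto
  finally show ?case using Suc by simp
qed

lemma sgn_unit: "cmod w = 1 \<Longrightarrow> sgn w = w"
  by (simp add: sgn_div_norm)

context hg
begin

lemma pos_vec_eq: "pos_vec n m AT = cv"
  unfolding pos_vec_def
proof (rule the_equality)
  show "cv \<in> rho_vecs n m AT \<and> (\<forall>i<n. cv i \<in> \<real> \<and> 0 < Re (cv i))"
    using cv_rho vv_pos by (simp add: cv_def)
next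
  fix y assume y: "y \<in> rho_vecs n m AT \<and> (\<forall>i<n. y i \<in> \<real> \<and> 0 < Re (y i))"
  show "y = cv"
  proof
    fix j show "y j = cv j"
    proof (cases "j < n")
      case True
      have R: "y j \<in> \<real>" "0 < Re (y j)" using y True by auto
      have e: "of_real (Re (y j)) = y j" using R(1) by (simp add: of_real_Re)
      have "cmod (y j) = Re (y j)" using e R(2) by (metis abs_of_pos norm_of_real)
      moreover have "cmod (y j) = vv j" using rho_abs True y by blast
      ultimately show ?thesis using e by (simp add: cv_def)
    next
      case False thus ?thesis using rho_out y by (simp add: cv_def vv_out)
    qed
  qed
qed

lemma phi_inj: "inj_on phi (rho_vecs n m AT)"
proof (rule inj_onI)
  fix a b assume a: "a \<in> rho_vecs n m AT" and b: "b \<in> rho_vecs n m AT" and eq: "phi a = phi b"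
  show "a = b"
  proof
    fix j show "a j = b j"
    proof (cases "j < n")
      case True thus ?thesis using rho_decomp(1)[OF a True] rho_decomp(1)[OF b True] eq by simp
    next
      case False thus ?thesis using rho_out[OF a] rho_out[OF b] by (simp add: not_less)
    qed
  qed
qed

lemma sgn_cv: "i < n \<Longrightarrow> sgn (cv i) = 1"
  using vv_pos by (simp add: cv_def sgn_of_real)

lemma phi_cv: "phi cv = (\<lambda>i. 1)"
  using sgn_cv by (auto simp: phi_def)

lemma phi_stab:
  assumes a: "a \<in> rho_vecs n m AT" and b: "b \<in> rho_vecs n m AT"
  shows "phi (stab_op n m AT a b) = (\<lambda>i. phi a i * phi b i)"
proof
  fix i show "phi (stab_op n m AT a b) i = phi a i * phi b i"
  proof (cases "i < n")
    case True
    have na: "cmod (sgn (a i)) = 1" using rho_decomp(2)[OF a True] True by (simp add: phi_def)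
    have nb: "cmod (sgn (b i)) = 1" using rho_decomp(2)[OF b True] True by (simp add: phi_def)
    have "phi (stab_op n m AT a b) i = sgn (sgn (a i) * sgn (b i) * cv i)"
      using True by (simp add: phi_def stab_op_def pos_vec_eq)
    also have "\<dots> = sgn (a i) * sgn (b i)"
      using sgn_unit[OF na] sgn_unit[OF nb] sgn_cv[OF True] by (simp add: sgn_mult)
    finally show ?thesis using True by (simp add: phi_def)
  next
    case False thus ?thesis by (simp add: phi_def stab_op_def)
  qed
qed

lemma sub_good:
  assumes N: "stab_submodule n m AT N"
  shows "good_set m (phi ` N)" "phi ` N \<subseteq> Sset"
proof -
  have Nr: "N \<subseteq> rho_vecs n m AT" and cvN: "cv \<in> N" and cl: "\<forall>a\<in>N. \<forall>b\<in>N. stab_op n m AT a b \<in> N"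
    using N by (auto simp: stab_submodule_def pos_vec_eq)
  show sub: "phi ` N \<subseteq> Sset" using Nr phi_Sset by blast
  show "good_set m (phi ` N)" unfolding good_set_def
  proof (intro conjI ballI allI)
    show "(\<lambda>i. 1) \<in> phi ` N" using cvN phi_cv by force
  next
    fix x y assume "x \<in> phi ` N" "y \<in> phi ` N"
    then obtain a b where ab: "a \<in> N" "b \<in> N" "x = phi a" "y = phi b" by auto
    have "phi (stab_op n m AT a b) = (\<lambda>i. x i * y i)" using phi_stab ab Nr by auto
    moreover have "stab_op n m AT a b \<in> N" using cl ab by auto
    ultimately show "(\<lambda>i. x i * y i) \<in> phi ` N" by force
  next
    fix x i assume "x \<in> phi ` N" thus "x i ^ m = 1" using sub Sset_pow by blast
  qed
qed

lemma single_sub: "stab_submodule n m AT {cv}"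
proof -
  have so: "stab_op n m AT cv cv = cv"
  proof
    fix i show "stab_op n m AT cv cv i = cv i"
      using sgn_cv by (simp add: stab_op_def pos_vec_eq cv_def vv_out)
  qed
  have "stab_smult n m AT k cv = cv" for k
  proof (induction k)
    case 0 thus ?case by (simp add: stab_smult_def pos_vec_eq)
  next
    case (Suc k) thus ?case using so by (simp add: stab_smult_def)
  qed
  thus ?thesis using so cv_rho by (simp add: stab_submodule_def pos_vec_eq)
qed

lemma Sset_fin: "finite Sset"
proof -
  have "is_path n E [0] []" using n1 by (simp add: is_path_def)
  hence "card Sset dvd m ^ (n - 0 - 1)" using card_Sset_dvd by fastforce
  moreover have "m ^ (n - 0 - 1) \<noteq> 0" using m2 by simp
  ultimately have "card Sset \<noteq> 0" by (metis dvd_0_left_iff)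
  thus ?thesis using card_ge_0_finite by blast
qed

lemma chain_bound:
  assumes g: "\<And>i. i \<le> k \<Longrightarrow> good_set m (T i)" and s: "\<And>i. i \<le> k \<Longrightarrow> T i \<subseteq> Sset"
    and c: "\<And>i. i < k \<Longrightarrow> T i \<subset> T (Suc i)"
  shows "k \<le> cl (card Sset)"
proof -
  have fin: "finite (T i)" if "i \<le> k" for i using s[OF that] Sset_fin finite_subset by blast
  have pos: "card (T i) \<noteq> 0" if "i \<le> k" for i
    using g[OF that] fin[OF that] by (auto simp: good_set_def)
  have "j \<le> cl (card (T j))" if "j \<le> k" for j
    using that
  proof (induction j)
    case 0 thus ?case by simp
  next
    case (Suc j)
    have jk: "j \<le> k" "j < k" using Suc.prems by auto
    have dv: "card (T j) dvd card (T (Suc j))"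
      using good_card_dvd[OF g[OF jk(1)] g[OF Suc.prems]] c[OF jk(2)] m2 by auto
    have lt: "card (T j) < card (T (Suc j))" using psubset_card_mono[OF fin[OF Suc.prems] c[OF jk(2)]] .
    obtain r where r: "card (T (Suc j)) = card (T j) * r" using dv by blast
    have r0: "r \<noteq> 0" using r pos[OF Suc.prems] by auto
    have "r \<noteq> 1" using r lt by auto
    hence r2: "r \<ge> 2" using r0 by linarith
    have "cl (card (T (Suc j))) = cl (card (T j)) + cl r" using r cl_mult pos[OF jk(1)] r0 by simp
    thus ?case using Suc.IH[OF jk(1)] cl_ge1[OF r2] by simp
  qed
  hence "k \<le> cl (card (T k))" by simp
  also have "\<dots> \<le> cl (card Sset)"
  proof (rule cl_dvd)
    show "card (T k) dvd card Sset" by (rule good_card_dvd[OF g[of k] Sset_good s[of k]]) (use m2 in auto)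
    show "card Sset \<noteq> 0" using Sset_fin Sset_good by (auto simp: good_set_def)
  qed
  finally show ?thesis .
qed

end

theorem corollary4p15:
  fixes n m :: nat and E :: "nat set set"
  assumes "m \<ge> 2" and "n \<ge> 1"
    and "uniform_hypergraph n m E" and "hg_connected n E"
  shows "stabilizing_index n m (adj_tensor m E) \<le> m ^ (n - max_path_length n E - 1)
       \<and> stabilizing_dimension n m (adj_tensor m E) \<le> (n - max_path_length n E - 1) * cl m"
proof -
  interpret hg n m E using assms by unfold_locales
  obtain vs es where path: "is_path n E vs es" and len: "length es = max_path_length n E"
    by (rule max_path)
  define l where "l = max_path_length n E"
  have dv: "card Sset dvd m ^ (n - l - 1)" using card_Sset_dvd[OF path] len l_def by simp
  have mpos: "0 < m ^ (n - l - 1)" using assms(1) by simp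
  have part1: "stabilizing_index n m (adj_tensor m E) \<le> m ^ (n - l - 1)"
    using Sset_alt dvd_imp_le[OF dv mpos] by simp
  define B where "B = (n - l - 1) * cl m"
  have clS: "cl (card Sset) \<le> B"
  proof -
    have "cl (card Sset) \<le> cl (m ^ (n - l - 1))" using cl_dvd[OF dv] mpos by (metis less_not_refl)
    also have "\<dots> = B" using cl_pow assms(1) by (simp add: B_def)
    finally show ?thesis .
  qed
  define KS where "KS = {k. \<exists>N :: nat \<Rightarrow> (nat \<Rightarrow> complex) set.
      (\<forall>i\<le>k. stab_submodule n m (adj_tensor m E) (N i)) \<and> (\<forall>i<k. N i \<subset> N (Suc i))}"
  have KB: "k \<le> B" if k: "k \<in> KS" for k
  proof -
    obtain N where N: "\<And>i. i \<le> k \<Longrightarrow> stab_submodule n m AT (N i)" "\<And>i. i < k \<Longrightarrow> N i \<subset> N (Suc i)"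
      using k unfolding KS_def by blast
    have "k \<le> cl (card Sset)"
    proof (rule chain_bound[of k "\<lambda>i. phi ` N i"])
      fix i assume "i \<le> k"
      thus "good_set m (phi ` N i)" "phi ` N i \<subseteq> Sset" using sub_good N(1) by auto
    next
      fix i assume i: "i < k"
      have "N (Suc i) \<subseteq> rho_vecs n m AT" using N(1)[of "Suc i"] i by (simp add: stab_submodule_def)
      hence R: "N (Suc i) \<subseteq> rho_vecs n m AT" .
      have ss: "N i \<subset> N (Suc i)" by (rule N(2)[OF i])
      then obtain x where x: "x \<in> N (Suc i)" "x \<notin> N i" by blast
      have "phi x \<notin> phi ` N i"
      proof
        assume "phi x \<in> phi ` N i"
        then obtain y where y: "y \<in> N i" "phi x = phi y" by auto
        have xr: "x \<in> rho_vecs n m AT" using x(1) R by blast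
        have yr: "y \<in> rho_vecs n m AT" using y(1) R ss by blast
        have "x = y" using phi_inj xr yr y(2) unfolding inj_on_def by blast
        thus False using x y by simp
      qed
      thus "phi ` N i \<subset> phi ` N (Suc i)" using ss x by blast
    qed
    thus ?thesis using clS by simp
  qed
  have "0 \<in> KS" unfolding KS_def using single_sub by (auto intro!: exI[of _ "\<lambda>_. {cv}"])
  moreover have "finite KS" using KB by (meson finite_atMost finite_subset atMost_iff subsetI)
  ultimately have "Max KS \<in> KS" by (intro Max_in) auto
  hence "Max KS \<le> B" by (rule KB)
  hence "stabilizing_dimension n m (adj_tensor m E) \<le> B" unfolding stabilizing_dimension_def KS_def .
  thus ?thesis using part1 by (simp add: B_def l_def)
qed


end
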